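(* Let $p$ be an odd prime. Then $$\Psi^w_{\mathbb{Z}_{2p}}(x)=\left[\frac{2}{p-1}\sum_{d\mid\frac{p-1}{2}}\phi\!\left(\frac{p-1}{2d}\right)\left(1+x^{\frac{p-1}{d}}\right)^{d}\left(\left(1+x^{\frac{p-1}{d}}\right)^{d}(1+x)-1\right)\right]-x,$$ and hence $$\mathcal{E}^w(\mathbb{Z}_{2p})=\Psi^w_{\mathbb{Z}_{2p}}(1)=-1+\frac{2}{p-1}\sum_{d\mid\frac{p-1}{2}}\phi\!\left(\frac{p-1}{2d}\right)2^d\left(2^{d+1}-1\right).$$
   Context: $\phi$ is Euler's totient function. For a finite group $\mathcal{A}$ with identity $e$, let $G(\mathcal{A})=\{\Omega\subseteq\mathcal{A}:\Omega^{-1}=\Omega,\ \langle\Omega\rangle=\mathcal{A},\ e\notin\Omega\}$. $\mathrm{Aut}(\mathcal{A})$ acts on $G(\mathcal{A})$ by $\alpha\cdot\Omega=\alpha(\Omega)$. For $k\ge1$ let $a^w_k(\mathcal{A})$ be the number of orbits of $\mathrm{Aut}(\mathcal{A})$ on $\{\Omega\in G(\mathcal{A}):|\Omega|=k\}$ (the number of weak equivalence classes of Cayley graphs $C(\mathcal{A},\Omega)$ of degree $k$); $\Psi^w_{\mathcal{A}}(x)=\sum_{k=1}^{|\mathcal{A}|-1}a^w_k(\mathcal{A})x^k$ and $\mathcal{E}^w(\mathcal{A})=\Psi^w_{\mathcal{A}}(1)$. *)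

theory Defs
  imports "HOL-Algebra.Elementary_Groups" "HOL-Algebra.Generated_Groups"
    "HOL-Number_Theory.Number_Theory" Complex_Main
begin

definition cayley_sets :: "('a, 'b) monoid_scheme \<Rightarrow> 'a set set" where
  "cayley_sets G = {\<Omega>. \<Omega> \<subseteq> carrier G \<and> m_inv G ` \<Omega> = \<Omega> \<and>
                          generate G \<Omega> = carrier G \<and> \<one>\<^bsub>G\<^esub> \<notin> \<Omega>}"

definition aut_orbit :: "('a, 'b) monoid_scheme \<Rightarrow> 'a set \<Rightarrow> 'a set set" where
  "aut_orbit G \<Omega> = (\<lambda>\<alpha>. \<alpha> ` \<Omega>) ` iso G G"

definition a_w :: "('a, 'b) monoid_scheme \<Rightarrow> nat \<Rightarrow> nat" where
  "a_w G k = card (aut_orbit G ` {\<Omega> \<in> cayley_sets G. card \<Omega> = k})"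

definition Psi_w :: "('a, 'b) monoid_scheme \<Rightarrow> real \<Rightarrow> real" where
  "Psi_w G x = (\<Sum>k = 1..card (carrier G) - 1. real (a_w G k) * x ^ k)"

definition E_w :: "('a, 'b) monoid_scheme \<Rightarrow> real" where
  "E_w G = Psi_w G 1"

end

theory Submission
  imports Defs
begin


locale cyc_action =
  fixes m :: nat and X :: "'x set" and act :: "nat \<Rightarrow> 'x \<Rightarrow> 'x"
  assumes m_pos: "m > 0"
    and act0: "t \<in> X \<Longrightarrow> act 0 t = t"
    and actc: "t \<in> X \<Longrightarrow> act i (act j t) = act ((i + j) mod m) t"
    and actX: "t \<in> X \<Longrightarrow> act j t \<in> X"
begin

definition orb where "orb t = (\<lambda>j. act j t) ` {..<m}"
definition stab where "stab t = {j\<in>{..<m}. act j t = t}"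

lemma act_mod: "t \<in> X \<Longrightarrow> act (j mod m) t = act j t"
proof -
  assume t: "t \<in> X"
  have "act j t = act j (act 0 t)" using act0[OF t] by simp
  also have "\<dots> = act (j mod m) t" using actc[OF t, of j 0] by simp
  finally show ?thesis ..
qed

lemma self_in_orb: "t \<in> X \<Longrightarrow> t \<in> orb t"
  unfolding orb_def using m_pos act0 by (auto intro!: image_eqI[of _ _ 0])

lemma finite_orb: "finite (orb t)" unfolding orb_def by simp

lemma orb_nonempty: "t \<in> X \<Longrightarrow> card (orb t) > 0"
  using self_in_orb finite_orb card_gt_0_iff by blast

lemma orb_subset: "t \<in> X \<Longrightarrow> orb t \<subseteq> X"
  unfolding orb_def using actX by auto

lemma orb_same:
  assumes t: "t \<in> X" and s: "s \<in> orb t" shows "orb s = orb t"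
proof -
  obtain i where i: "i < m" "s = act i t" using s unfolding orb_def by auto
  show ?thesis
  proof
    show "orb s \<subseteq> orb t"
      unfolding orb_def using i actc[OF t] m_pos by auto
    show "orb t \<subseteq> orb s"
    proof
      fix y assume "y \<in> orb t"
      then obtain k where k: "k < m" "y = act k t" unfolding orb_def by auto
      have "act ((k + (m - i)) mod m) s = act (((k + (m - i)) mod m + i) mod m) t"
        using i actc[OF t] by simp
      also have "((k + (m - i)) mod m + i) mod m = k"
      proof -
        have "((k + (m - i)) mod m + i) mod m = (k + (m - i) + i) mod m" by (simp add: mod_add_left_eq)
        also have "k + (m - i) + i = k + m" using i by simp
        finally show ?thesis using k by simp
      qed
      finally show "y \<in> orb s" unfolding orb_def using k m_pos
        by (auto intro!: image_eqI[of _ _ "(k + (m - i)) mod m"])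
    qed
  qed
qed

lemma orb_stab:
  assumes t: "t \<in> X" shows "card (orb t) * card (stab t) = m"
proof -
  have fib: "card {j\<in>{..<m}. act j t = y} = card (stab t)" if y: "y \<in> orb t" for y
  proof -
    obtain i where i: "i < m" "y = act i t" using y unfolding orb_def by auto
    have inj1: "inj_on (\<lambda>j. (j + i) mod m) {..<m}"
    proof (rule inj_onI)
      fix a b assume "a \<in> {..<m}" "b \<in> {..<m}" "(a + i) mod m = (b + i) mod m"
      then show "a = b" by (metis lessThan_iff mod_less cong_add_rcancel_nat cong_def)
    qed
    have inj2: "inj_on (\<lambda>j. (j + (m - i)) mod m) {..<m}"
    proof (rule inj_onI)
      fix a b assume "a \<in> {..<m}" "b \<in> {..<m}" "(a + (m - i)) mod m = (b + (m - i)) mod m"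
      then show "a = b" by (metis lessThan_iff mod_less cong_add_rcancel_nat cong_def)
    qed
    have "card (stab t) \<le> card {j\<in>{..<m}. act j t = y}"
    proof (rule card_inj_on_le[where f = "\<lambda>j. (j + i) mod m"])
      show "inj_on (\<lambda>j. (j + i) mod m) (stab t)" using inj1 unfolding stab_def
        by (rule inj_on_subset) auto
      show "(\<lambda>j. (j + i) mod m) ` stab t \<subseteq> {j \<in> {..<m}. act j t = y}"
      proof
        fix z assume "z \<in> (\<lambda>j. (j + i) mod m) ` stab t"
        then obtain xa where xa: "xa < m" "act xa t = t" "z = (xa + i) mod m" unfolding stab_def by auto
        have "act z t = act i (act xa t)" using actc[OF t, of i xa] xa by (simp add: add.commute)
        then show "z \<in> {j \<in> {..<m}. act j t = y}" using xa i m_pos by auto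
      qed
    qed auto
    moreover have "card {j\<in>{..<m}. act j t = y} \<le> card (stab t)"
    proof (rule card_inj_on_le[where f = "\<lambda>j. (j + (m - i)) mod m"])
      show "inj_on (\<lambda>j. (j + (m - i)) mod m) {j \<in> {..<m}. act j t = y}" using inj2
        by (rule inj_on_subset) auto
      show "(\<lambda>j. (j + (m - i)) mod m) ` {j \<in> {..<m}. act j t = y} \<subseteq> stab t"
      proof
        fix z assume "z \<in> (\<lambda>j. (j + (m - i)) mod m) ` {j \<in> {..<m}. act j t = y}"
        then obtain k where k: "k < m" "act k t = y" "z = (k + (m - i)) mod m" by auto
        have "act z t = act (m - i) (act k t)" using k actc[OF t, of "m - i" k] by (simp add: add.commute)
        also have "\<dots> = act (m - i) (act i t)" using k i by simp
        also have "\<dots> = act 0 t" using actc[OF t] i by simp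
        finally show "z \<in> stab t" unfolding stab_def using k m_pos act0[OF t] by auto
      qed
    qed (auto simp: stab_def)
    ultimately show ?thesis by simp
  qed
  have "m = card {..<m}" by simp
  also have "\<dots> = (\<Sum>y\<in>orb t. card {j\<in>{..<m}. act j t = y})"
    using sum.group[of "{..<m}" "orb t" "\<lambda>j. act j t" "\<lambda>_. (1::nat)"]
    unfolding orb_def by simp
  also have "\<dots> = (\<Sum>y\<in>orb t. card (stab t))" using fib by simp
  finally show ?thesis by simp
qed

lemma card_orbits:
  assumes Y: "Y \<subseteq> X" "finite Y" "\<And>t. t \<in> Y \<Longrightarrow> orb t \<subseteq> Y"
  shows "real (card (orb ` Y)) = (\<Sum>t\<in>Y. 1 / real (card (orb t)))"
proof -
  have "(\<Sum>t\<in>Y. 1 / real (card (orb t))) =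
        (\<Sum>Ob\<in>orb ` Y. \<Sum>t\<in>{t\<in>Y. orb t = Ob}. 1 / real (card (orb t)))"
    using sum.group[of Y "orb ` Y" orb "\<lambda>t. 1 / real (card (orb t))"] Y by simp
  also have "\<dots> = (\<Sum>Ob\<in>orb ` Y. 1)"
  proof (rule sum.cong[OF refl])
    fix Ob assume "Ob \<in> orb ` Y"
    then obtain t0 where t0: "t0 \<in> Y" "Ob = orb t0" by auto
    have eq: "{t\<in>Y. orb t = Ob} = Ob"
    proof
      show "{t\<in>Y. orb t = Ob} \<subseteq> Ob"
      proof
        fix x assume x: "x \<in> {t\<in>Y. orb t = Ob}"
        then have "x \<in> orb x" using Y self_in_orb by auto
        then show "x \<in> Ob" using x by simp
      qed
      show "Ob \<subseteq> {t\<in>Y. orb t = Ob}" using t0 Y orb_same by auto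
    qed
    have "(\<Sum>t\<in>{t\<in>Y. orb t = Ob}. 1 / real (card (orb t))) = (\<Sum>t\<in>{t\<in>Y. orb t = Ob}. 1 / real (card Ob))"
      by (rule sum.cong) auto
    also have "\<dots> = (\<Sum>t\<in>Ob. 1 / real (card Ob))" using eq by simp
    also have "\<dots> = 1" using orb_nonempty[of t0] t0 Y by auto
    finally show "(\<Sum>t\<in>{t\<in>Y. orb t = Ob}. 1 / real (card (orb t))) = 1" .
  qed
  finally show ?thesis by simp
qed

lemma burnside:
  assumes Y: "Y \<subseteq> X" "finite Y"
  shows "(\<Sum>t\<in>Y. w t / real (card (orb t))) =
         (1 / real m) * (\<Sum>j<m. \<Sum>t\<in>{t\<in>Y. act j t = t}. w t)"
proof -
  have "(\<Sum>t\<in>Y. w t / real (card (orb t))) = (\<Sum>t\<in>Y. (1 / real m) * (w t * real (card (stab t))))"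
  proof (rule sum.cong[OF refl])
    fix t assume "t \<in> Y"
    then have "real (card (orb t)) * real (card (stab t)) = real m" "card (orb t) > 0"
      using orb_stab orb_nonempty Y by (metis of_nat_mult subsetD)+
    then show "w t / real (card (orb t)) = (1 / real m) * (w t * real (card (stab t)))"
      using m_pos by (auto simp: field_simps)
  qed
  also have "\<dots> = (1 / real m) * (\<Sum>t\<in>Y. \<Sum>j\<in>{j\<in>{..<m}. act j t = t}. w t)"
    by (simp add: sum_distrib_left stab_def mult.commute)
  also have "(\<Sum>t\<in>Y. \<Sum>j\<in>{j\<in>{..<m}. act j t = t}. w t) = (\<Sum>j<m. \<Sum>t\<in>{t\<in>Y. act j t = t}. w t)"
    by (rule sum.swap_restrict) (use Y in auto)
  finally show ?thesis .
qed

end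




definition sh :: "nat \<Rightarrow> nat \<Rightarrow> nat set \<Rightarrow> nat set" where
  "sh m j A = (\<lambda>a. (a + j) mod m) ` A"

lemma sh_comp: "sh m i (sh m j A) = sh m ((i + j) mod m) A"
proof -
  have "((a + j) mod m + i) mod m = (a + (i + j) mod m) mod m" for a
  proof -
    have "((a + j) mod m + i) mod m = (a + j + i) mod m" by (simp add: mod_add_left_eq)
    also have "\<dots> = (a + (i + j)) mod m" by (simp add: ac_simps)
    also have "\<dots> = (a + (i + j) mod m) mod m" by (simp add: mod_add_right_eq)
    finally show ?thesis .
  qed
  then show ?thesis unfolding sh_def image_image by simp
qed

lemma sh_0: "A \<subseteq> {..<m} \<Longrightarrow> sh m 0 A = A"
  unfolding sh_def by (auto simp: subset_iff image_iff)

lemma sh_sub: "m > 0 \<Longrightarrow> sh m j A \<subseteq> {..<m}"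
  unfolding sh_def by auto

lemma inj_shift: "inj_on (\<lambda>a. (a + j) mod m) {..<(m::nat)}"
proof (rule inj_onI)
  fix a b assume ab: "a \<in> {..<m}" "b \<in> {..<m}" "(a + j) mod m = (b + j) mod m"
  then have "[a + j = b + j] (mod m)" by (simp add: cong_def)
  then have "[a = b] (mod m)" by (simp add: cong_add_rcancel_nat)
  then show "a = b" using ab by (simp add: cong_def)
qed

lemma card_sh: "A \<subseteq> {..<m} \<Longrightarrow> card (sh m j A) = card A"
  unfolding sh_def using inj_on_subset[OF inj_shift[of j m]] by (simp add: card_image)

lemma sh_empty: "sh m j A = {} \<longleftrightarrow> A = {}"
  unfolding sh_def by simp

lemma mem_sh: "a \<in> A \<Longrightarrow> (a + j) mod m \<in> sh m j A"
  unfolding sh_def by auto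

lemma sh_iter:
  assumes "sh m s A = A" shows "sh m ((t * s) mod m) A = A"
proof (induction t)
  case 0
  have "sh m 0 A = sh m (0 + s) (sh m s A) \<or> True" by simp
  have "A \<subseteq> {..<m} \<or> m = 0"
    using assms sh_sub[of m s A] by (cases "m = 0") auto
  then show ?case
  proof
    assume "A \<subseteq> {..<m}" then show ?case using sh_0 by simp
  next
    assume "m = 0" then show ?case using assms unfolding sh_def by simp
  qed
next
  case (Suc t)
  have "sh m ((Suc t * s) mod m) A = sh m ((s + (t * s) mod m) mod m) A"
    by (simp add: mod_add_right_eq add.commute)
  also have "\<dots> = sh m s (sh m ((t * s) mod m) A)" by (simp add: sh_comp)
  also have "\<dots> = A" using Suc assms by simp
  finally show ?case .
qed

lemma sh_periodic:
  assumes m: "m > 0" and j: "j < m" and A: "A \<subseteq> {..<m}"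
  shows "sh m j A = A \<longleftrightarrow> (\<forall>a<m. a \<in> A \<longleftrightarrow> a mod gcd j m \<in> A)"
proof -
  define d where "d = gcd j m"
  have d0: "d > 0" using m by (simp add: d_def)
  have ddvd: "d dvd m" "d dvd j" by (simp_all add: d_def)
  have dm: "d \<le> m" using ddvd m by (simp add: dvd_imp_le)
  show ?thesis unfolding d_def[symmetric]
  proof
    assume fx: "sh m j A = A"
    have shd: "sh m d A = A"
    proof (cases "j = 0")
      case True
      have "sh m m A = sh m 0 A" unfolding sh_def by simp
      then show ?thesis using fx True by (simp add: d_def)
    next
      case False
      obtain x y where xy: "j * x = m * y + d" using bezout_nat[OF False, of m] unfolding d_def by auto
      have "d \<le> j" using False ddvd by (simp add: dvd_imp_le)
      then have "d < m" using j by simp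
      then have "(x * j) mod m = d" using xy by (simp add: mult.commute)
      then show ?thesis using sh_iter[OF fx, of x] by simp
    qed
    show "\<forall>a<m. a \<in> A \<longleftrightarrow> a mod d \<in> A"
    proof (intro allI impI)
      fix a assume a: "a < m"
      have adiv: "a div d \<le> m div d" using a by (simp add: div_le_mono)
      have mdm: "(m div d) * d = m" using ddvd by simp
      show "a \<in> A \<longleftrightarrow> a mod d \<in> A"
      proof
        assume "a \<in> A"
        then have "(a + ((m div d - a div d) * d) mod m) mod m \<in> A"
          using mem_sh[of a A "((m div d - a div d) * d) mod m" m] sh_iter[OF shd, of "m div d - a div d"] by simp
        moreover have "(a + ((m div d - a div d) * d) mod m) mod m = a mod d"
        proof -
          have q1: "(m div d - a div d) * d = m - (a div d) * d" using mdm by (simp add: diff_mult_distrib)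
          have q2: "a = (a div d) * d + a mod d" by simp
          have q3: "(a div d) * d \<le> a" by (rule div_times_less_eq_dividend)
          have "a + (m div d - a div d) * d = a mod d + m"
            using q1 q2 q3 a by linarith
          then have "(a + ((m div d - a div d) * d) mod m) mod m = (a mod d + m) mod m"
            by (simp add: mod_add_right_eq)
          also have "\<dots> = a mod d"
          proof -
            have "a mod d < d" using d0 by simp
            then have "a mod d < m" using dm by linarith
            then show ?thesis by simp
          qed
          finally show ?thesis .
        qed
        ultimately show "a mod d \<in> A" by simp
      next
        assume "a mod d \<in> A"
        then have "(a mod d + ((a div d) * d) mod m) mod m \<in> A"
          using mem_sh[of "a mod d" A "((a div d) * d) mod m" m] sh_iter[OF shd, of "a div d"] by simp
        moreover have "(a mod d + ((a div d) * d) mod m) mod m = a"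
          using a by (simp add: mod_add_right_eq)
        ultimately show "a \<in> A" by simp
      qed
    qed
  next
    assume per: "\<forall>a<m. a \<in> A \<longleftrightarrow> a mod d \<in> A"
    have "sh m j A \<subseteq> A"
    proof
      fix b assume "b \<in> sh m j A"
      then obtain a where a: "a \<in> A" "b = (a + j) mod m" unfolding sh_def by auto
      have "b mod d = (a + j) mod d" using a ddvd by (simp add: mod_mod_cancel)
      also have "\<dots> = a mod d" using ddvd by (auto elim!: dvdE)
      finally have "b mod d = a mod d" .
      moreover have "a mod d \<in> A" using per a A by auto
      moreover have "b < m" using a m by simp
      ultimately show "b \<in> A" using per by auto
    qed
    moreover have "card (sh m j A) = card A" using card_sh[OF A] .
    moreover have "finite A" using A finite_subset by blast
    ultimately show "sh m j A = A" using card_subset_eq by blast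
  qed
qed

lemma sum_Pow_power:
  fixes y :: real
  assumes "finite S" shows "(\<Sum>A\<in>Pow S. y ^ card A) = (1 + y) ^ card S"
  using assms
proof (induction S rule: finite_induct)
  case empty then show ?case by simp
next
  case (insert a S)
  have "Pow (insert a S) = Pow S \<union> insert a ` Pow S" by (rule Pow_insert)
  moreover have "Pow S \<inter> insert a ` Pow S = {}" using insert by auto
  moreover have "inj_on (insert a) (Pow S)" using insert by (auto intro!: inj_onI)
  moreover have "(\<Sum>B\<in>Pow S. y ^ card (insert a B)) = y * (\<Sum>B\<in>Pow S. y ^ card B)"
    by (simp add: sum_distrib_left) (rule sum.cong, auto simp: insert finite_subset card_insert_if dest!: subsetD[of _ S a])
  ultimately have "(\<Sum>A\<in>Pow (insert a S). y ^ card A) = (1 + y) * (\<Sum>B\<in>Pow S. y ^ card B)"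
    using insert by (simp add: sum.union_disjoint sum.reindex algebra_simps)
  then show ?case using insert by simp
qed

definition FA :: "nat \<Rightarrow> nat \<Rightarrow> nat set set" where
  "FA m j = {A \<in> Pow {..<m}. sh m j A = A}"

lemma sum_FA:
  fixes y :: real
  assumes m: "m > 0" and j: "j < m"
  shows "(\<Sum>A\<in>FA m j. y ^ card A) = (1 + y ^ (m div gcd j m)) ^ gcd j m"
proof -
  define d where "d = gcd j m"
  have d0: "d > 0" using m by (simp add: d_def)
  have ddvd: "d dvd m" by (simp add: d_def)
  have dm: "d \<le> m" using ddvd m by (simp add: dvd_imp_le)
  define E where "E A' = {a\<in>{..<m}. a mod d \<in> A'}" for A'
  have FAc: "FA m j = {A \<in> Pow {..<m}. \<forall>a<m. a \<in> A \<longleftrightarrow> a mod d \<in> A}"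
    unfolding FA_def d_def using sh_periodic[OF m j] by auto
  have cardE: "card (E A') = (m div d) * card A'" if A': "A' \<subseteq> {..<d}" for A'
  proof -
    have "E A' = (\<lambda>(q, r). q * d + r) ` ({..<m div d} \<times> A')"
    proof
      show "E A' \<subseteq> (\<lambda>(q, r). q * d + r) ` ({..<m div d} \<times> A')"
      proof
        fix a assume "a \<in> E A'"
        then have a: "a < m" "a mod d \<in> A'" unfolding E_def by auto
        have "a div d < m div d" using a ddvd d0 by (simp add: div_less_iff_less_mult)
        then show "a \<in> (\<lambda>(q, r). q * d + r) ` ({..<m div d} \<times> A')"
          using a by (auto intro!: image_eqI[of _ _ "(a div d, a mod d)"])
      qed
      show "(\<lambda>(q, r). q * d + r) ` ({..<m div d} \<times> A') \<subseteq> E A'"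
      proof
        fix a assume "a \<in> (\<lambda>(q, r). q * d + r) ` ({..<m div d} \<times> A')"
        then obtain q r where qr: "q < m div d" "r \<in> A'" "a = q * d + r" by auto
        have r: "r < d" using qr A' by auto
        have "q * d + r < (q + 1) * d" using r by simp
        also have "(q + 1) * d \<le> (m div d) * d" using qr by (intro mult_le_mono1) simp
        also have "\<dots> = m" using ddvd by simp
        finally have "a < m" using qr by simp
        moreover have "a mod d = r" using qr r by simp
        ultimately show "a \<in> E A'" unfolding E_def using qr by auto
      qed
    qed
    moreover have "inj_on (\<lambda>(q, r). q * d + r) ({..<m div d} \<times> A')"
    proof (rule inj_onI)
      fix u v assume uv: "u \<in> {..<m div d} \<times> A'" "v \<in> {..<m div d} \<times> A'"
        "(\<lambda>(q, r). q * d + r) u = (\<lambda>(q, r). q * d + r) v"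
      obtain q r where u: "u = (q, r)" by (cases u)
      obtain q' r' where v: "v = (q', r')" by (cases v)
      have r: "r < d" "r' < d" using uv u v A' by auto
      have e: "q * d + r = q' * d + r'" using uv u v by simp
      have "r = (q * d + r) mod d" using r by simp
      also have "\<dots> = r'" using e r by simp
      finally have rr: "r = r'" .
      have "q = (q * d + r) div d" using r d0 by simp
      also have "\<dots> = q'" using e r d0 by simp
      finally show "u = v" using u v rr by simp
    qed
    ultimately show ?thesis using A' by (simp add: card_image card_cartesian_product finite_subset)
  qed
  have bij: "bij_betw E (Pow {..<d}) (FA m j)"
  proof (rule bij_betw_byWitness[where f' = "\<lambda>A. A \<inter> {..<d}"])
    show "\<forall>A'\<in>Pow {..<d}. E A' \<inter> {..<d} = A'"
      unfolding E_def using dm by auto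
    show "\<forall>A\<in>FA m j. E (A \<inter> {..<d}) = A"
    proof
      fix A assume "A \<in> FA m j"
      then have A: "A \<subseteq> {..<m}" "\<forall>a<m. a \<in> A \<longleftrightarrow> a mod d \<in> A" unfolding FAc by auto
      show "E (A \<inter> {..<d}) = A" unfolding E_def using A d0 by auto
    qed
    show "E ` Pow {..<d} \<subseteq> FA m j"
      unfolding FAc E_def using less_le_trans[OF mod_less_divisor[OF d0] dm] by auto
    show "(\<lambda>A. A \<inter> {..<d}) ` FA m j \<subseteq> Pow {..<d}" by auto
  qed
  have "(\<Sum>A\<in>FA m j. y ^ card A) = (\<Sum>A'\<in>Pow {..<d}. y ^ card (E A'))"
    using sum.reindex_bij_betw[OF bij, of "\<lambda>A. y ^ card A"] by simp
  also have "\<dots> = (\<Sum>A'\<in>Pow {..<d}. (y ^ (m div d)) ^ card A')"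
    by (rule sum.cong) (auto simp: cardE power_mult)
  also have "\<dots> = (1 + y ^ (m div d)) ^ d" by (subst sum_Pow_power) auto
  finally show ?thesis by (simp add: d_def)
qed




type_synonym trip = "bool \<times> nat set \<times> nat set"

definition shT :: "nat \<Rightarrow> nat \<Rightarrow> trip \<Rightarrow> trip" where
  "shT m j t = (fst t, sh m j (fst (snd t)), sh m j (snd (snd t)))"

definition Tr :: "nat \<Rightarrow> trip set" where
  "Tr m = (UNIV :: bool set) \<times> Pow {..<m} \<times> Pow {..<m}"

definition wt :: "trip \<Rightarrow> nat" where
  "wt t = (if fst t then 1 else 0) + 2 * card (fst (snd t)) + 2 * card (snd (snd t))"

definition gen :: "trip \<Rightarrow> bool" where
  "gen t = (snd (snd t) \<noteq> {} \<or> (fst t \<and> fst (snd t) \<noteq> {}))"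

lemma cyc: "m > 0 \<Longrightarrow> cyc_action m (Tr m) (shT m)"
  by unfold_locales (auto simp: shT_def Tr_def sh_0 sh_comp sh_sub)

lemma shT_Tr: "m > 0 \<Longrightarrow> t \<in> Tr m \<Longrightarrow> shT m j t \<in> Tr m"
  by (auto simp: shT_def Tr_def sh_sub)

lemma wt_shT: "t \<in> Tr m \<Longrightarrow> wt (shT m j t) = wt t"
  by (auto simp: shT_def Tr_def wt_def card_sh)

lemma gen_shT: "gen (shT m j t) = gen t"
  by (auto simp: shT_def gen_def sh_empty)

lemma wt_bound: "t \<in> Tr m \<Longrightarrow> wt t \<le> 4 * m + 1"
proof -
  assume t: "t \<in> Tr m"
  have "card (fst (snd t)) \<le> m" "card (snd (snd t)) \<le> m"
    using t card_mono[of "{..<m}"] by (auto simp: Tr_def)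
  then show ?thesis unfolding wt_def by auto
qed

lemma wt_pos: "t \<in> Tr m \<Longrightarrow> gen t \<Longrightarrow> wt t \<ge> 1"
proof -
  assume t: "t \<in> Tr m" "gen t"
  have fin: "finite (fst (snd t))" "finite (snd (snd t))" using t by (auto simp: Tr_def finite_subset)
  show ?thesis
  proof (cases "snd (snd t) = {}")
    case False
    then have "card (snd (snd t)) > 0" using fin by (auto simp: card_gt_0_iff)
    then show ?thesis unfolding wt_def by simp
  next
    case True
    then have "fst t" "fst (snd t) \<noteq> {}" using t(2) unfolding gen_def by auto
    then have "card (fst (snd t)) > 0" using fin by (auto simp: card_gt_0_iff)
    then show ?thesis unfolding wt_def by simp
  qed
qed

lemma finite_Tr: "finite (Tr m)"
  unfolding Tr_def by simp

lemma fixed_sum: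
  fixes x :: real
  assumes m: "m > 0" and j: "j < m"
  shows "(\<Sum>t\<in>{t\<in>{t\<in>Tr m. gen t}. shT m j t = t}. x ^ wt t) =
         (1 + x) * (\<Sum>A\<in>FA m j. (x^2) ^ card A)^2 - (\<Sum>A\<in>FA m j. (x^2) ^ card A) - x"
proof -
  define F where "F = FA m j"
  define S where "S = (\<Sum>A\<in>F. (x^2) ^ card A)"
  have finF: "finite F" unfolding F_def FA_def by simp
  have emF: "{} \<in> F" unfolding F_def FA_def sh_def by simp
  define Fix where "Fix = (UNIV :: bool set) \<times> F \<times> F"
  have Fix_eq: "{t\<in>Tr m. shT m j t = t} = Fix"
    unfolding Fix_def F_def FA_def Tr_def shT_def by auto
  have finFix: "finite Fix" unfolding Fix_def using finF by simp
  have split: "Fix = {t\<in>Fix. gen t} \<union> {t\<in>Fix. \<not> gen t}" by auto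
  have "(\<Sum>t\<in>Fix. x ^ wt t) = (\<Sum>t\<in>{t\<in>Fix. gen t}. x ^ wt t) + (\<Sum>t\<in>{t\<in>Fix. \<not> gen t}. x ^ wt t)"
    by (subst split, rule sum.union_disjoint) (use finFix in auto)
  moreover have "(\<Sum>t\<in>Fix. x ^ wt t) = (1 + x) * S^2"
  proof -
    have "(\<Sum>t\<in>Fix. x ^ wt t) = (\<Sum>e\<in>UNIV. \<Sum>A\<in>F. \<Sum>B\<in>F. x ^ wt (e, A, B))"
      unfolding Fix_def by (simp add: sum.cartesian_product split_beta)
    also have "\<dots> = (\<Sum>e\<in>UNIV. \<Sum>A\<in>F. \<Sum>B\<in>F. x ^ (if e then 1 else 0) * ((x^2) ^ card A * (x^2) ^ card B))"
      by (simp add: wt_def power_add power_mult mult.assoc)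
    also have "\<dots> = (\<Sum>e\<in>UNIV. x ^ (if e then 1 else 0) * (S * S))"
    proof (rule sum.cong[OF refl])
      fix e :: bool
      have "S * S = (\<Sum>A\<in>F. \<Sum>B\<in>F. (x^2) ^ card A * (x^2) ^ card B)" unfolding S_def by (rule sum_product)
      then show "(\<Sum>A\<in>F. \<Sum>B\<in>F. x ^ (if e then 1 else 0) * ((x^2) ^ card A * (x^2) ^ card B)) =
                 x ^ (if e then 1 else 0) * (S * S)" by (simp add: sum_distrib_left)
    qed
    also have "\<dots> = (1 + x) * S^2" by (simp add: UNIV_bool power2_eq_square algebra_simps)
    finally show ?thesis .
  qed
  moreover have "(\<Sum>t\<in>{t\<in>Fix. \<not> gen t}. x ^ wt t) = S + x"
  proof -
    have eq: "{t\<in>Fix. \<not> gen t} = insert (True, {}, {}) ((\<lambda>A. (False, A, {})) ` F)"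
      unfolding Fix_def gen_def using emF by auto
    have "(\<Sum>t\<in>{t\<in>Fix. \<not> gen t}. x ^ wt t) = x ^ wt (True, {}, {}) + (\<Sum>t\<in>(\<lambda>A. (False, A, {})) ` F. x ^ wt t)"
      unfolding eq by (rule sum.insert) (use finF in auto)
    also have "(\<Sum>t\<in>(\<lambda>A. (False, A, {})) ` F. x ^ wt t) = (\<Sum>A\<in>F. x ^ wt (False, A, {}))"
      by (rule sum.reindex_cong[where l = "\<lambda>A. (False, A, {})"]) (auto intro: inj_onI)
    also have "\<dots> = S" unfolding S_def by (simp add: wt_def power_mult)
    finally show ?thesis by (simp add: wt_def)
  qed
  moreover have "{t\<in>{t\<in>Tr m. gen t}. shT m j t = t} = {t\<in>Fix. gen t}"
    using Fix_eq by auto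
  ultimately show ?thesis unfolding S_def F_def by (simp add: algebra_simps)
qed

lemma totient_regroup:
  fixes h :: "nat \<Rightarrow> real"
  assumes m: "m > 0"
  shows "(\<Sum>j<m. h (gcd j m)) = (\<Sum>d | d dvd m. real (totient (m div d)) * h d)"
proof -
  have "(\<Sum>j<m. h (gcd j m)) = (\<Sum>j\<in>{0<..m}. h (gcd j m))"
    by (rule sum.reindex_bij_witness[where i = "\<lambda>j. if j = m then 0 else j"
          and j = "\<lambda>j. if j = 0 then m else j"]) (use m in auto)
  also have "\<dots> = (\<Sum>d | d dvd m. \<Sum>j\<in>{j\<in>{0<..m}. gcd j m = d}. h (gcd j m))"
    by (rule sum.group[symmetric]) (use m in auto)
  also have "\<dots> = (\<Sum>d | d dvd m. real (card {j\<in>{0<..m}. gcd j m = d}) * h d)"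
    by (rule sum.cong) auto
  also have "\<dots> = (\<Sum>d | d dvd m. real (totient (m div d)) * h d)"
    by (rule sum.cong) (use m card_gcd_eq_totient in auto)
  finally show ?thesis .
qed

theorem count_triples:
  fixes x :: real
  assumes m: "m > 0"
  shows "(\<Sum>k = 1..4 * m + 1. real (card (cyc_action.orb m (shT m) ` {t\<in>Tr m. gen t \<and> wt t = k})) * x ^ k)
       = (1 / real m) * (\<Sum>d | d dvd m. real (totient (m div d)) *
            ((1 + x) * ((1 + (x^2) ^ (m div d)) ^ d)^2 - (1 + (x^2) ^ (m div d)) ^ d)) - x"
proof -
  interpret C: cyc_action m "Tr m" "shT m" using cyc[OF m] .
  define Y where "Y = {t\<in>Tr m. gen t}"
  have finY: "finite Y" unfolding Y_def using finite_Tr by simp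
  have Yk: "{t\<in>Tr m. gen t \<and> wt t = k} = {t\<in>Y. wt t = k}" for k unfolding Y_def by auto
  have closed: "C.orb t \<subseteq> {t'\<in>Y. wt t' = k}" if "t \<in> {t\<in>Y. wt t = k}" for t k
    using that unfolding C.orb_def Y_def by (auto simp: shT_Tr[OF m] wt_shT gen_shT)
  have "(\<Sum>k = 1..4 * m + 1. real (card (C.orb ` {t\<in>Tr m. gen t \<and> wt t = k})) * x ^ k)
      = (\<Sum>k = 1..4 * m + 1. \<Sum>t\<in>{t\<in>Y. wt t = k}. x ^ wt t / real (card (C.orb t)))"
  proof (rule sum.cong[OF refl])
    fix k
    have "real (card (C.orb ` {t\<in>Y. wt t = k})) = (\<Sum>t\<in>{t\<in>Y. wt t = k}. 1 / real (card (C.orb t)))"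
      by (rule C.card_orbits) (use finY closed finite_Tr in \<open>auto simp: Y_def\<close>)
    then show "real (card (C.orb ` {t\<in>Tr m. gen t \<and> wt t = k})) * x ^ k =
               (\<Sum>t\<in>{t\<in>Y. wt t = k}. x ^ wt t / real (card (C.orb t)))"
      unfolding Yk by (simp add: sum_distrib_right)
  qed
  also have "\<dots> = (\<Sum>t\<in>Y. x ^ wt t / real (card (C.orb t)))"
    by (rule sum.group) (use finY wt_bound wt_pos in \<open>auto simp: Y_def\<close>)
  also have "\<dots> = (1 / real m) * (\<Sum>j<m. \<Sum>t\<in>{t\<in>Y. shT m j t = t}. x ^ wt t)"
    by (rule C.burnside) (use finY in \<open>auto simp: Y_def\<close>)
  also have "(\<Sum>j<m. \<Sum>t\<in>{t\<in>Y. shT m j t = t}. x ^ wt t)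
     = (\<Sum>j<m. (1 + x) * ((1 + (x^2) ^ (m div gcd j m)) ^ gcd j m)^2 - (1 + (x^2) ^ (m div gcd j m)) ^ gcd j m) - real m * x"
  proof -
    have "(\<Sum>j<m. \<Sum>t\<in>{t\<in>Y. shT m j t = t}. x ^ wt t)
        = (\<Sum>j<m. ((1 + x) * ((1 + (x^2) ^ (m div gcd j m)) ^ gcd j m)^2 - (1 + (x^2) ^ (m div gcd j m)) ^ gcd j m) - x)"
    proof (rule sum.cong[OF refl])
      fix j assume "j \<in> {..<m}"
      then have j: "j < m" by simp
      show "(\<Sum>t\<in>{t\<in>Y. shT m j t = t}. x ^ wt t) =
            (1 + x) * ((1 + (x^2) ^ (m div gcd j m)) ^ gcd j m)^2 - (1 + (x^2) ^ (m div gcd j m)) ^ gcd j m - x"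
        unfolding Y_def using fixed_sum[OF m j, of x] sum_FA[OF m j, of "x^2"] by simp
    qed
    then show ?thesis by (simp add: sum_subtractf)
  qed
  also have "(\<Sum>j<m. (1 + x) * ((1 + (x^2) ^ (m div gcd j m)) ^ gcd j m)^2 - (1 + (x^2) ^ (m div gcd j m)) ^ gcd j m)
      = (\<Sum>d | d dvd m. real (totient (m div d)) *
            ((1 + x) * ((1 + (x^2) ^ (m div d)) ^ d)^2 - (1 + (x^2) ^ (m div d)) ^ d))"
    by (rule totient_regroup[OF m])
  finally show ?thesis using m by (simp add: field_simps)
qed




lemma mod2P_cong: "[(a::int) mod (2 * P) = a] (mod P)"
  unfolding cong_def by (simp add: mod_mod_cancel)

lemma mod2P_even: "even ((a::int) mod (2 * P)) \<longleftrightarrow> even a"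
proof -
  have "(a mod (2 * P)) mod 2 = a mod 2" by (simp add: mod_mod_cancel)
  then show ?thesis by (simp add: even_iff_mod_2_eq_zero)
qed

lemma mod_half_cases:
  fixes a b mm :: nat
  assumes "a < 2 * mm" "b < 2 * mm" "a mod mm = b mod mm"
  shows "a = b \<or> a = b + mm \<or> b = a + mm"
proof -
  have ha: "a = a mod mm \<or> a = a mod mm + mm"
  proof (cases "a < mm")
    case True then show ?thesis by simp
  next
    case False
    then have "a mod mm = a - mm" using assms(1) by (simp add: le_mod_geq)
    then show ?thesis using False by simp
  qed
  have hb: "b = b mod mm \<or> b = b mod mm + mm"
  proof (cases "b < mm")
    case True then show ?thesis by simp
  next
    case False
    then have "b mod mm = b - mm" using assms(2) by (simp add: le_mod_geq)
    then show ?thesis using False by simp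
  qed
  from ha hb assms(3) show ?thesis by auto
qed

locale zp =
  fixes p :: nat and g :: nat
  assumes prime: "prime p" and oddp: "odd p" and groot: "residue_primroot p g"
begin

definition mm :: nat where "mm = (p - 1) div 2"

definition L :: "int \<Rightarrow> nat" where
  "L y = (THE i. i < p - 1 \<and> [int g ^ i = y] (mod int p))"

definition c :: "int \<Rightarrow> nat" where "c y = L y mod mm"

lemma p3: "p \<ge> 3"
proof -
  have "p \<ge> 2" using prime by (simp add: prime_ge_2_nat)
  moreover have "p \<noteq> 2" using oddp by auto
  ultimately show ?thesis by simp
qed

lemma pm: "p - 1 = 2 * mm"
  unfolding mm_def using oddp p3 by (auto elim!: oddE)

lemma mm_pos: "mm > 0" using pm p3 by simp

lemma primeP: "prime (int p)" using prime by simp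

lemma P1: "int p > 1" using p3 by simp

lemma oddP: "odd (int p)" using oddp by simp

lemma gen_bij: "bij_betw (\<lambda>i. g ^ i mod p) {..<p - 1} {0<..<p}"
  using residue_primroot_is_generator[of p g] groot p3 prime
  by (simp add: totient_prime totatives_prime)

lemma cop_g: "coprime p g" using groot by (simp add: residue_primroot_def)

lemma ord_g: "ord p g = p - 1" using groot prime by (simp add: residue_primroot_def totient_prime)

lemma not_dvd_gpow: "\<not> int p dvd int g ^ i"
proof
  assume "int p dvd int g ^ i"
  then have "int p dvd int g" by (rule prime_dvd_power[OF primeP])
  then have "p dvd g" by simp
  then have "is_unit p" using coprime_common_divisor[OF cop_g dvd_refl] by simp
  then show False using p3 by simp
qed

lemma pow_unique:
  assumes "i < p - 1" "i' < p - 1" "[int g ^ i = int g ^ i'] (mod int p)"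
  shows "i = i'"
proof -
  have "[g ^ i = g ^ i'] (mod p)" using assms(3) cong_int_iff[of "g ^ i" "g ^ i'" p] by simp
  then have "g ^ i mod p = g ^ i' mod p" by (simp add: cong_def)
  then show ?thesis using gen_bij assms(1,2) unfolding bij_betw_def inj_on_def by auto
qed

lemma pow_exists:
  assumes "\<not> int p dvd y"
  shows "\<exists>i<p - 1. [int g ^ i = y] (mod int p)"
proof -
  define r where "r = nat (y mod int p)"
  have "y mod int p \<ge> 0" "y mod int p < int p" using P1 by auto
  moreover have "y mod int p \<noteq> 0" using assms by (simp add: dvd_eq_mod_eq_0)
  ultimately have r: "r \<in> {0<..<p}" unfolding r_def by auto
  have "r \<in> (\<lambda>i. g ^ i mod p) ` {..<p - 1}" using gen_bij r unfolding bij_betw_def by simp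
  then obtain i where i: "i < p - 1" "g ^ i mod p = r" by auto
  have "int (g ^ i mod p) = y mod int p" using i r_def \<open>y mod int p \<ge> 0\<close> by simp
  then have "[int g ^ i = y] (mod int p)" by (simp add: cong_def of_nat_mod)
  then show ?thesis using i by auto
qed

lemma L_unique:
  assumes i: "i < p - 1" "[int g ^ i = y] (mod int p)" shows "L y = i"
  unfolding L_def
proof (rule the_equality)
  show "i < p - 1 \<and> [int g ^ i = y] (mod int p)" using i by simp
  fix i' assume h: "i' < p - 1 \<and> [int g ^ i' = y] (mod int p)"
  then have "[int g ^ i' = int g ^ i] (mod int p)" using cong_trans[OF _ cong_sym[OF i(2)]] by blast
  then show "i' = i" using pow_unique[of i' i] h i by simp
qed

lemma L_prop: "\<not> int p dvd y \<Longrightarrow> L y < p - 1 \<and> [int g ^ L y = y] (mod int p)"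
proof -
  assume "\<not> int p dvd y"
  then obtain i where i: "i < p - 1" "[int g ^ i = y] (mod int p)" using pow_exists by blast
  then have "L y = i" by (rule L_unique)
  then show ?thesis using i by simp
qed

lemma L_cong: "[y = y'] (mod int p) \<Longrightarrow> L y = L y'"
proof -
  assume h: "[y = y'] (mod int p)"
  have "(\<lambda>i. i < p - 1 \<and> [int g ^ i = y] (mod int p)) = (\<lambda>i. i < p - 1 \<and> [int g ^ i = y'] (mod int p))"
    using h by (auto intro: cong_trans cong_sym)
  then show ?thesis unfolding L_def by simp
qed

lemma g_pm1: "[int g ^ (p - 1) = 1] (mod int p)"
proof -
  have "[g ^ ord p g = 1] (mod p)" using ord_works by blast
  then have "[g ^ (p - 1) = 1] (mod p)" using ord_g by simp
  then show ?thesis using cong_int_iff[of "g ^ (p - 1)" 1 p] by simp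
qed

lemma gpow_mod: "[int g ^ i = int g ^ (i mod (p - 1))] (mod int p)"
proof -
  have "int g ^ i = int g ^ ((p - 1) * (i div (p - 1)) + i mod (p - 1))" by simp
  also have "\<dots> = (int g ^ (p - 1)) ^ (i div (p - 1)) * int g ^ (i mod (p - 1))"
    by (simp only: power_add power_mult)
  finally have "int g ^ i = (int g ^ (p - 1)) ^ (i div (p - 1)) * int g ^ (i mod (p - 1))" .
  moreover have "[(int g ^ (p - 1)) ^ (i div (p - 1)) * int g ^ (i mod (p - 1)) = 1 ^ (i div (p - 1)) * int g ^ (i mod (p - 1))] (mod int p)"
    by (intro cong_mult cong_pow g_pm1 cong_refl)
  ultimately show ?thesis by simp
qed

lemma g_mm: "[int g ^ mm = - 1] (mod int p)"
proof -
  have "[int g ^ (2 * mm) = 1] (mod int p)" using g_pm1 pm by simp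
  have e0: "int g ^ (2 * mm) = int g ^ mm * int g ^ mm" by (simp only: mult_2 power_add)
  have e: "(int g ^ mm - 1) * (int g ^ mm + 1) = int g ^ (2 * mm) - 1"
    unfolding e0 by (simp add: algebra_simps)
  have "int p dvd int g ^ (2 * mm) - 1" using \<open>[int g ^ (2 * mm) = 1] (mod int p)\<close>
    by (simp add: cong_iff_dvd_diff)
  then have "int p dvd (int g ^ mm - 1) * (int g ^ mm + 1)" using e by simp
  then have "int p dvd int g ^ mm - 1 \<or> int p dvd int g ^ mm + 1"
    using primeP prime_dvd_mult_iff by blast
  moreover have "\<not> int p dvd int g ^ mm - 1"
  proof
    assume "int p dvd int g ^ mm - 1"
    then have "[int g ^ mm = 1] (mod int p)" by (simp add: cong_iff_dvd_diff)
    then have "[g ^ mm = 1] (mod p)" using cong_int_iff[of "g ^ mm" 1 p] by simp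
    moreover have "0 < mm" "mm < ord p g" using mm_pos pm ord_g by auto
    ultimately show False using ord_works[of g p] by blast
  qed
  ultimately have "int p dvd int g ^ mm - (- 1)" by simp
  then show ?thesis by (simp add: cong_iff_dvd_diff)
qed

lemma L_mult:
  assumes "\<not> int p dvd u" "\<not> int p dvd y"
  shows "L (u * y) = (L u + L y) mod (p - 1)"
proof (rule L_unique)
  show "(L u + L y) mod (p - 1) < p - 1" using p3 by simp
  have "[int g ^ ((L u + L y) mod (p - 1)) = int g ^ (L u + L y)] (mod int p)"
    using gpow_mod cong_sym by blast
  moreover have "[int g ^ (L u + L y) = u * y] (mod int p)"
    using L_prop[OF assms(1)] L_prop[OF assms(2)] by (simp add: power_add cong_mult)
  ultimately show "[int g ^ ((L u + L y) mod (p - 1)) = u * y] (mod int p)" by (rule cong_trans)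
qed

lemma L_neg:
  assumes "\<not> int p dvd y"
  shows "L (- y) = (L y + mm) mod (p - 1)"
proof (rule L_unique)
  show "(L y + mm) mod (p - 1) < p - 1" using p3 by simp
  have "[int g ^ ((L y + mm) mod (p - 1)) = int g ^ (L y + mm)] (mod int p)"
    using gpow_mod cong_sym by blast
  moreover have "[int g ^ (L y + mm) = y * (- 1)] (mod int p)"
    using cong_mult[OF conjunct2[OF L_prop[OF assms]] g_mm] by (simp add: power_add)
  ultimately have "[int g ^ ((L y + mm) mod (p - 1)) = y * (- 1)] (mod int p)" by (rule cong_trans)
  then show "[int g ^ ((L y + mm) mod (p - 1)) = - y] (mod int p)" by simp
qed

lemma c_lt: "c y < mm" unfolding c_def using mm_pos by simp

lemma c_cong: "[y = y'] (mod int p) \<Longrightarrow> c y = c y'"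
  unfolding c_def using L_cong by simp

lemma c_mult:
  assumes "\<not> int p dvd u" "\<not> int p dvd y"
  shows "c (u * y) = (c u + c y) mod mm"
proof -
  have "c (u * y) = ((L u + L y) mod (2 * mm)) mod mm" unfolding c_def L_mult[OF assms] pm ..
  also have "\<dots> = (L u + L y) mod mm" by (simp add: mod_mod_cancel)
  also have "\<dots> = (c u + c y) mod mm" unfolding c_def by (simp add: mod_add_eq)
  finally show ?thesis .
qed

lemma c_neg:
  assumes "\<not> int p dvd y" shows "c (- y) = c y"
proof -
  have "c (- y) = ((L y + mm) mod (2 * mm)) mod mm" unfolding c_def L_neg[OF assms] pm ..
  also have "\<dots> = (L y + mm) mod mm" by (simp add: mod_mod_cancel)
  also have "\<dots> = c y" unfolding c_def by simp
  finally show ?thesis .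
qed

lemma c_eq:
  assumes "\<not> int p dvd y" "\<not> int p dvd y'" "c y = c y'"
  shows "[y = y'] (mod int p) \<or> [y = - y'] (mod int p)"
proof -
  have a: "L y < 2 * mm" "[int g ^ L y = y] (mod int p)" using L_prop[OF assms(1)] pm by auto
  have b: "L y' < 2 * mm" "[int g ^ L y' = y'] (mod int p)" using L_prop[OF assms(2)] pm by auto
  have "L y = L y' \<or> L y = L y' + mm \<or> L y' = L y + mm"
    using mod_half_cases[OF a(1) b(1)] assms(3) unfolding c_def by simp
  then show ?thesis
  proof (elim disjE)
    assume "L y = L y'"
    then show ?thesis using cong_trans[OF cong_sym[OF a(2)]] b(2) by simp
  next
    assume e: "L y = L y' + mm"
    have h: "[int g ^ L y = int g ^ L y' * (- 1)] (mod int p)"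
      unfolding e power_add by (intro cong_mult cong_refl g_mm)
    have "[y = y' * (- 1)] (mod int p)"
      using cong_trans[OF cong_sym[OF a(2)] cong_trans[OF h cong_mult[OF b(2) cong_refl]]] by simp
    then show ?thesis by simp
  next
    assume e: "L y' = L y + mm"
    have h: "[int g ^ L y' = int g ^ L y * (- 1)] (mod int p)"
      unfolding e power_add by (intro cong_mult cong_refl g_mm)
    have "[y' = y * (- 1)] (mod int p)"
      using cong_trans[OF cong_sym[OF b(2)] cong_trans[OF h cong_mult[OF a(2) cong_refl]]] by simp
    then have "int p dvd y' + y" by (simp add: cong_iff_dvd_diff)
    then have "int p dvd - (y' + y)" by (simp only: dvd_minus_iff)
    then have "[- y' = y] (mod int p)" by (simp add: cong_iff_dvd_diff)
    then show ?thesis by (simp add: cong_sym)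
  qed
qed

lemma c_gpow: "a < mm \<Longrightarrow> c (int g ^ a) = a"
  unfolding c_def using L_unique[of a "int g ^ a"] pm by simp

lemma rep_ex:
  assumes "\<not> int p dvd y"
  shows "\<exists>x. 0 \<le> x \<and> x < 2 * int p \<and> \<not> int p dvd x \<and> (even x \<longleftrightarrow> ev) \<and> [x = y] (mod int p)"
proof -
  define r where "r = y mod int p"
  have r: "0 \<le> r" "r < int p" "r \<noteq> 0" using P1 assms unfolding r_def by (auto simp: dvd_eq_mod_eq_0)
  have rc: "[r = y] (mod int p)" unfolding r_def by (simp add: cong_def)
  have nd: "\<not> int p dvd r" using r by (auto dest: zdvd_imp_le)
  show ?thesis
  proof (cases "even r \<longleftrightarrow> ev")
    case True then show ?thesis using r rc nd by (intro exI[of _ r]) auto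
  next
    case False
    have "even (r + int p) \<longleftrightarrow> ev" using False oddP by auto
    moreover have "[r + int p = y] (mod int p)" using rc by (simp add: cong_def)
    moreover have "\<not> int p dvd r + int p" using nd by simp
    ultimately show ?thesis using r by (intro exI[of _ "r + int p"]) auto
  qed
qed

definition Phi :: "trip \<Rightarrow> int set" where
  "Phi t = {x \<in> {0..<2 * int p}. (x = int p \<and> fst t) \<or>
                (\<not> int p dvd x \<and> even x \<and> c x \<in> fst (snd t)) \<or>
                (\<not> int p dvd x \<and> odd x \<and> c x \<in> snd (snd t))}"

definition PS :: "bool \<Rightarrow> nat set \<Rightarrow> int set" where
  "PS ev A = {x \<in> {0..<2 * int p}. \<not> int p dvd x \<and> (even x \<longleftrightarrow> ev) \<and> c x \<in> A}"

lemma Phi_split: "Phi (e, A, B) = (if e then {int p} else {}) \<union> PS True A \<union> PS False B"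
  unfolding Phi_def PS_def using P1 by auto

lemma card_PS:
  assumes A: "A \<subseteq> {..<mm}"
  shows "card (PS ev A) = 2 * card A"
proof -
  define Y where "Y = {y \<in> {1..<int p}. c y \<in> A}"
  have "bij_betw (\<lambda>x. x mod int p) (PS ev A) Y"
    unfolding bij_betw_def
  proof
    show "inj_on (\<lambda>x. x mod int p) (PS ev A)"
    proof (rule inj_onI)
      fix x x' assume x: "x \<in> PS ev A" and x': "x' \<in> PS ev A" and e: "x mod int p = x' mod int p"
      have "int p dvd x - x'" using e by (simp add: mod_eq_dvd_iff)
      moreover have "2 dvd x - x'" using x x' unfolding PS_def by auto
      ultimately have "2 * int p dvd x - x'" using oddP
        by (intro divides_mult) (auto simp: coprime_commute)
      then have "[x = x'] (mod 2 * int p)" by (simp add: cong_iff_dvd_diff)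
      then show "x = x'" using x x' unfolding PS_def by (auto intro: cong_less_imp_eq_int)
    qed
    show "(\<lambda>x. x mod int p) ` PS ev A = Y"
    proof
      show "(\<lambda>x. x mod int p) ` PS ev A \<subseteq> Y"
      proof
        fix y assume "y \<in> (\<lambda>x. x mod int p) ` PS ev A"
        then obtain x where x: "x \<in> PS ev A" "y = x mod int p" by auto
        have "y \<noteq> 0" using x unfolding PS_def by (auto simp: dvd_eq_mod_eq_0)
        moreover have "0 \<le> y" "y < int p" using x P1 by auto
        ultimately have "1 \<le> y" "y < int p" by auto
        moreover have "c y = c x" using x by (intro c_cong) (simp add: cong_def)
        ultimately show "y \<in> Y" using x \<open>1 \<le> y\<close> \<open>y < int p\<close> unfolding Y_def PS_def by auto
      qed
      show "Y \<subseteq> (\<lambda>x. x mod int p) ` PS ev A"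
      proof
        fix y assume y: "y \<in> Y"
        then have nd: "\<not> int p dvd y" unfolding Y_def by (auto dest: zdvd_imp_le)
        obtain x where x: "0 \<le> x" "x < 2 * int p" "\<not> int p dvd x" "even x \<longleftrightarrow> ev" "[x = y] (mod int p)"
          using rep_ex[OF nd, of ev] by blast
        have "x mod int p = y" using x(5) y unfolding Y_def by (simp add: cong_def)
        moreover have "c x = c y" using x(5) by (rule c_cong)
        ultimately show "y \<in> (\<lambda>x. x mod int p) ` PS ev A"
          using x y unfolding PS_def Y_def by (auto intro!: image_eqI[of _ _ x])
      qed
    qed
  qed
  then have "card (PS ev A) = card Y" by (rule bij_betw_same_card)
  also have "card Y = card {i \<in> {..<p - 1}. i mod mm \<in> A}"
  proof -
    have "bij_betw L Y {i \<in> {..<p - 1}. i mod mm \<in> A}"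
      unfolding bij_betw_def
    proof
      show "inj_on L Y"
      proof (rule inj_onI)
        fix y y' assume y: "y \<in> Y" and y': "y' \<in> Y" and e: "L y = L y'"
        have "\<not> int p dvd y" "\<not> int p dvd y'" using y y' unfolding Y_def by (auto dest: zdvd_imp_le)
        then have h1: "[int g ^ L y = y] (mod int p)" "[int g ^ L y' = y'] (mod int p)" using L_prop by auto
        have "[y = y'] (mod int p)" using cong_trans[OF cong_sym[OF h1(1)]] h1(2) e by simp
        then show "y = y'" using y y' unfolding Y_def by (auto intro: cong_less_imp_eq_int)
      qed
      show "L ` Y = {i \<in> {..<p - 1}. i mod mm \<in> A}"
      proof
        show "L ` Y \<subseteq> {i \<in> {..<p - 1}. i mod mm \<in> A}"
        proof
          fix i assume "i \<in> L ` Y"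
          then obtain y where y: "y \<in> Y" "i = L y" by auto
          then have "\<not> int p dvd y" unfolding Y_def by (auto dest: zdvd_imp_le)
          then show "i \<in> {i \<in> {..<p - 1}. i mod mm \<in> A}" using L_prop y unfolding Y_def c_def by auto
        qed
        show "{i \<in> {..<p - 1}. i mod mm \<in> A} \<subseteq> L ` Y"
        proof
          fix i assume i: "i \<in> {i \<in> {..<p - 1}. i mod mm \<in> A}"
          define y where "y = int g ^ i mod int p"
          have "[int g ^ i = y] (mod int p)" unfolding y_def by (simp add: cong_def)
          then have Ly: "L y = i" using i L_unique by auto
          have "y \<noteq> 0" using not_dvd_gpow[of i] unfolding y_def by (simp add: dvd_eq_mod_eq_0)
          moreover have "0 \<le> y" "y < int p" using P1 unfolding y_def by auto
          ultimately have "y \<in> Y" using Ly i unfolding Y_def c_def by auto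
          then show "i \<in> L ` Y" using Ly by force
        qed
      qed
    qed
    then show ?thesis by (rule bij_betw_same_card)
  qed
  also have "{i \<in> {..<p - 1}. i mod mm \<in> A} = A \<union> (\<lambda>a. a + mm) ` A"
  proof
    show "{i \<in> {..<p - 1}. i mod mm \<in> A} \<subseteq> A \<union> (\<lambda>a. a + mm) ` A"
    proof
      fix i assume i: "i \<in> {i \<in> {..<p - 1}. i mod mm \<in> A}"
      show "i \<in> A \<union> (\<lambda>a. a + mm) ` A"
      proof (cases "i < mm")
        case True then show ?thesis using i by simp
      next
        case False
        have lt: "i - mm < mm" using i pm False by auto
        have "i mod mm = (i - mm) mod mm" using False le_mod_geq[of mm i] by simp
        also have "\<dots> = i - mm" using lt by simp
        finally have "i mod mm = i - mm" .
        then show ?thesis using i False by (auto intro!: image_eqI[of _ _ "i - mm"])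
      qed
    qed
    show "A \<union> (\<lambda>a. a + mm) ` A \<subseteq> {i \<in> {..<p - 1}. i mod mm \<in> A}"
      using A pm by auto
  qed
  also have "card (A \<union> (\<lambda>a. a + mm) ` A) = card A + card ((\<lambda>a. a + mm) ` A)"
    by (rule card_Un_disjoint) (use A finite_subset in auto)
  also have "card ((\<lambda>a. a + mm) ` A) = card A" by (simp add: card_image)
  finally show ?thesis by simp
qed

lemma card_Phi: "t \<in> Tr mm \<Longrightarrow> card (Phi t) = wt t"
proof -
  assume t: "t \<in> Tr mm"
  obtain e A B where eAB: "t = (e, A, B)" by (cases t)
  have AB: "A \<subseteq> {..<mm}" "B \<subseteq> {..<mm}" using t eAB by (auto simp: Tr_def)
  have fin: "finite (PS ev X)" for ev X unfolding PS_def by (rule finite_subset[of _ "{0..<2 * int p}"]) auto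
  have d1: "((if e then {int p} else {}) \<union> PS True A) \<inter> PS False B = {}" by (auto simp: PS_def)
  have d2: "(if e then {int p} else {}) \<inter> PS True A = {}" by (auto simp: PS_def)
  have f1: "finite ((if e then {int p} else {}) \<union> PS True A)" by (simp add: fin)
  have "card (Phi t) = card ((if e then {int p} else {}) \<union> PS True A) + card (PS False B)"
    unfolding eAB Phi_split by (rule card_Un_disjoint[OF f1 fin d1])
  also have "card ((if e then {int p} else {}) \<union> PS True A) = (if e then 1 else 0) + card (PS True A)"
    by (subst card_Un_disjoint[OF _ fin d2]) auto
  finally show ?thesis using card_PS AB unfolding eAB wt_def by simp
qed

end




lemma parity_cong2: "(even (a::int) \<longleftrightarrow> even b) \<Longrightarrow> [a = b] (mod 2)"
proof -
  assume h: "even a \<longleftrightarrow> even b"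
  have "2 dvd a - b"
  proof (cases "even a")
    case True then show ?thesis using h by auto
  next
    case False
    then have "odd b" using h by simp
    then have "2 dvd (a + 1) - (b + 1)" using False by (intro dvd_diff) auto
    then show ?thesis by simp
  qed
  then show ?thesis by (simp add: cong_iff_dvd_diff)
qed

lemma prime2_int: "prime (2::int)"
  using prime_nat_iff_prime[of 2] by simp

lemma odd_coprime2: "odd (x::int) \<Longrightarrow> coprime x 2"
  using prime_imp_coprime[OF prime2_int, of x] by (simp add: coprime_commute)

context zp
begin

abbreviation G where "G \<equiv> integer_mod_group (2 * p)"

lemma carrG: "carrier G = {0..<2 * int p}"
  using p3 by (simp add: carrier_integer_mod_group)

lemma invG: "x \<in> carrier G \<Longrightarrow> inv\<^bsub>G\<^esub> x = (- x) mod (2 * int p)"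
  by simp

lemma grpG: "group G" by simp

lemma crt2: "[a = b] (mod 2) \<Longrightarrow> [a = b] (mod int p) \<Longrightarrow> [a = b] (mod 2 * int p)"
proof -
  assume "[a = b] (mod 2)" "[a = b] (mod int p)"
  then have "2 dvd a - b" "int p dvd a - b" by (simp_all add: cong_iff_dvd_diff)
  moreover have "coprime (2::int) (int p)" using odd_coprime2[OF oddP] by (simp add: coprime_commute)
  ultimately have "2 * int p dvd a - b" by (rule divides_mult)
  then show ?thesis by (simp add: cong_iff_dvd_diff)
qed

lemma cop_P: "\<not> int p dvd x \<Longrightarrow> coprime x (int p)"
  using prime_imp_coprime[OF primeP, of x] by (simp add: coprime_commute)

lemma cop_2P: "odd x \<Longrightarrow> \<not> int p dvd x \<Longrightarrow> coprime x (2 * int p)"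
  using odd_coprime2 cop_P by simp

lemma cop_2P_D:
  assumes "coprime u (2 * int p)" shows "odd u" "\<not> int p dvd u"
proof -
  have c2: "coprime u 2" and cP: "coprime u (int p)" using assms by simp_all
  show "odd u"
  proof
    assume "even u"
    then have "is_unit (2::int)" using coprime_common_divisor[OF c2 _ dvd_refl] by blast
    then show False by simp
  qed
  show "\<not> int p dvd u"
  proof
    assume "int p dvd u"
    then have "is_unit (int p)" using coprime_common_divisor[OF cP _ dvd_refl] by blast
    then show False using P1 by simp
  qed
qed

lemma minusP: "(- int p) mod (2 * int p) = int p"
proof -
  have "(- int p) mod (2 * int p) = (- int p + 2 * int p) mod (2 * int p)" by (simp only: mod_add_self2)
  also have "- int p + 2 * int p = int p" by simp
  also have "int p mod (2 * int p) = int p" using P1 by simp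
  finally show ?thesis .
qed

lemma dvd_range: "0 < x \<Longrightarrow> x < 2 * int p \<Longrightarrow> int p dvd x \<Longrightarrow> x = int p"
proof -
  assume x: "0 < x" "x < 2 * int p" "int p dvd x"
  then obtain k where k: "x = int p * k" by (auto elim: dvdE)
  have "k > 0" using x k P1 by (simp add: zero_less_mult_iff)
  moreover have "k < 2" using x k P1 by simp
  ultimately have "k = 1" by simp
  then show ?thesis using k by simp
qed

lemma hit:
  assumes "a < mm"
  shows "\<exists>x. 0 \<le> x \<and> x < 2 * int p \<and> \<not> int p dvd x \<and> (even x \<longleftrightarrow> ev) \<and> c x = a"
proof -
  obtain x where x: "0 \<le> x" "x < 2 * int p" "\<not> int p dvd x" "even x \<longleftrightarrow> ev" "[x = int g ^ a] (mod int p)"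
    using rep_ex[OF not_dvd_gpow[of a], of ev] by blast
  have "c x = a" using c_cong[OF x(5)] c_gpow[OF assms] by simp
  then show ?thesis using x by blast
qed

lemma Phi_sub: "Phi t \<subseteq> carrier G" unfolding Phi_def carrG by auto

lemma zero_notin_Phi: "0 \<notin> Phi t" unfolding Phi_def using P1 by auto

lemma finite_Phi: "finite (Phi t)"
  using Phi_sub[of t] by (rule finite_subset) (simp add: carrG)

lemma Phi_negclosed:
  assumes x: "x \<in> Phi t" shows "(- x) mod (2 * int p) \<in> Phi t"
proof -
  define x' where "x' = (- x) mod (2 * int p)"
  have r: "0 \<le> x'" "x' < 2 * int p" unfolding x'_def using P1 by auto
  have cg: "[x' = - x] (mod int p)" unfolding x'_def by (rule mod2P_cong)
  have ev: "even x' \<longleftrightarrow> even x" unfolding x'_def by (simp add: mod2P_even)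
  from x have x0: "0 \<le> x" "x < 2 * int p" unfolding Phi_def by auto
  from x consider "x = int p \<and> fst t" | "\<not> int p dvd x \<and> even x \<and> c x \<in> fst (snd t)"
    | "\<not> int p dvd x \<and> odd x \<and> c x \<in> snd (snd t)" unfolding Phi_def by auto
  then show ?thesis
  proof cases
    case 1 then show ?thesis using minusP P1 p3 unfolding x'_def[symmetric] Phi_def by (auto simp: x'_def)
  next
    case 2
    then have "\<not> int p dvd x'" using cong_dvd_iff[OF cg] by simp
    moreover have "c x' = c x" using c_cong[OF cg] c_neg 2 by simp
    ultimately show ?thesis using 2 r ev unfolding x'_def[symmetric] Phi_def by auto
  next
    case 3
    then have "\<not> int p dvd x'" using cong_dvd_iff[OF cg] by simp
    moreover have "c x' = c x" using c_cong[OF cg] c_neg 3 by simp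
    ultimately show ?thesis using 3 r ev unfolding x'_def[symmetric] Phi_def by auto
  qed
qed

lemma neg_neg_mod: "0 \<le> x \<Longrightarrow> x < 2 * int p \<Longrightarrow> (- ((- x) mod (2 * int p))) mod (2 * int p) = x"
  by (simp add: mod_minus_eq)

lemma Phi_inv: "m_inv G ` Phi t = Phi t"
proof
  show "m_inv G ` Phi t \<subseteq> Phi t"
  proof
    fix y assume "y \<in> m_inv G ` Phi t"
    then obtain x where x: "x \<in> Phi t" "y = m_inv G x" by auto
    have "x \<in> carrier G" using Phi_sub x(1) by blast
    then have "y = (- x) mod (2 * int p)" using invG x(2) by simp
    then show "y \<in> Phi t" using Phi_negclosed[OF x(1)] by simp
  qed
  show "Phi t \<subseteq> m_inv G ` Phi t"
  proof
    fix x assume x: "x \<in> Phi t"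
    have "x \<in> carrier G" using Phi_sub[of t] x by blast
    then have x0: "0 \<le> x" "x < 2 * int p" using carrG by auto
    have "(- x) mod (2 * int p) \<in> Phi t" using Phi_negclosed[OF x] .
    moreover have "m_inv G ((- x) mod (2 * int p)) = x"
    proof -
      have "(- x) mod (2 * int p) \<in> carrier G" using carrG P1 by auto
      then show ?thesis using invG neg_neg_mod[OF x0] by simp
    qed
    ultimately show "x \<in> m_inv G ` Phi t" by (metis image_eqI)
  qed
qed

definition ext :: "int set \<Rightarrow> trip" where
  "ext S = (int p \<in> S, c ` {x\<in>S. \<not> int p dvd x \<and> even x}, c ` {x\<in>S. \<not> int p dvd x \<and> odd x})"

lemma ext_Tr: "ext S \<in> Tr mm"
  unfolding ext_def Tr_def using c_lt by auto

lemma ext_Phi: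
  assumes t: "t \<in> Tr mm" shows "ext (Phi t) = t"
proof -
  obtain e A B where eAB: "t = (e, A, B)" by (cases t)
  have AB: "A \<subseteq> {..<mm}" "B \<subseteq> {..<mm}" using t eAB by (auto simp: Tr_def)
  have 1: "(int p \<in> Phi t) = e" unfolding eAB Phi_def using P1 by auto
  have 2: "c ` {x\<in>Phi t. \<not> int p dvd x \<and> (even x \<longleftrightarrow> ev)} = (if ev then A else B)" for ev
  proof
    show "c ` {x\<in>Phi t. \<not> int p dvd x \<and> (even x \<longleftrightarrow> ev)} \<subseteq> (if ev then A else B)"
      unfolding eAB Phi_def by auto
    show "(if ev then A else B) \<subseteq> c ` {x\<in>Phi t. \<not> int p dvd x \<and> (even x \<longleftrightarrow> ev)}"
    proof
      fix a assume a: "a \<in> (if ev then A else B)"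
      then have "a < mm" using AB by (cases ev) auto
      then obtain x where x: "0 \<le> x" "x < 2 * int p" "\<not> int p dvd x" "even x \<longleftrightarrow> ev" "c x = a"
        using hit by blast
      then have "x \<in> Phi t" using a unfolding eAB Phi_def by (cases ev) auto
      then show "a \<in> c ` {x\<in>Phi t. \<not> int p dvd x \<and> (even x \<longleftrightarrow> ev)}"
        using x by (auto intro!: image_eqI[of _ _ x])
    qed
  qed
  show ?thesis using 1 2[of True] 2[of False] unfolding ext_def eAB by simp
qed

lemma inj_Phi: "inj_on Phi (Tr mm)"
  by (rule inj_onI) (metis ext_Phi)

lemma Phi_ext:
  assumes S: "S \<subseteq> carrier G" "0 \<notin> S" "\<And>x. x \<in> S \<Longrightarrow> (- x) mod (2 * int p) \<in> S"
  shows "Phi (ext S) = S"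
proof
  show "S \<subseteq> Phi (ext S)"
  proof
    fix x assume x: "x \<in> S"
    then have x0: "0 \<le> x" "x < 2 * int p" "x \<noteq> 0" using S carrG by auto
    show "x \<in> Phi (ext S)"
    proof (cases "int p dvd x")
      case True
      then have "x = int p" using dvd_range x0 by simp
      then show ?thesis using x x0 unfolding Phi_def ext_def by auto
    next
      case False
      then show ?thesis using x x0 unfolding Phi_def ext_def by auto
    qed
  qed
  show "Phi (ext S) \<subseteq> S"
  proof
    fix x assume x: "x \<in> Phi (ext S)"
    then have x0: "0 \<le> x" "x < 2 * int p" unfolding Phi_def by auto
    have key: "x \<in> S" if nd: "\<not> int p dvd x" and par: "even x \<longleftrightarrow> ev"
      and cx: "c x \<in> c ` {x'\<in>S. \<not> int p dvd x' \<and> (even x' \<longleftrightarrow> ev)}" for ev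
    proof -
      obtain x' where x': "x' \<in> S" "\<not> int p dvd x'" "even x' \<longleftrightarrow> ev" "c x = c x'" using cx by auto
      have x'0: "0 \<le> x'" "x' < 2 * int p" using x' S carrG by auto
      from c_eq[OF nd x'(2) x'(4)] show "x \<in> S"
      proof
        assume "[x = x'] (mod int p)"
        moreover have "[x = x'] (mod 2)" using par x' by (intro parity_cong2) simp
        ultimately have "[x = x'] (mod 2 * int p)" using crt2 by blast
        then have "x = x'" using x0 x'0 by (intro cong_less_imp_eq_int) auto
        then show ?thesis using x' by simp
      next
        assume h: "[x = - x'] (mod int p)"
        define y where "y = (- x') mod (2 * int p)"
        have "[y = - x'] (mod int p)" unfolding y_def by (rule mod2P_cong)
        then have "[x = y] (mod int p)" using h by (meson cong_sym cong_trans)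
        moreover have "[x = y] (mod 2)" using par x' unfolding y_def by (intro parity_cong2) (simp add: mod2P_even)
        ultimately have "[x = y] (mod 2 * int p)" using crt2 by blast
        moreover have "0 \<le> y" "y < 2 * int p" unfolding y_def using P1 by auto
        ultimately have "x = y" using x0 by (intro cong_less_imp_eq_int) auto
        then show ?thesis using S(3)[OF x'(1)] unfolding y_def by simp
      qed
    qed
    from x consider "x = int p \<and> int p \<in> S"
      | "\<not> int p dvd x \<and> even x \<and> c x \<in> c ` {x'\<in>S. \<not> int p dvd x' \<and> even x'}"
      | "\<not> int p dvd x \<and> odd x \<and> c x \<in> c ` {x'\<in>S. \<not> int p dvd x' \<and> odd x'}"
      unfolding Phi_def ext_def by auto
    then show "x \<in> S"
    proof cases
      case 1 then show ?thesis by simp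
    next
      case 2 then show ?thesis using key[of True] by simp
    next
      case 3 then show ?thesis using key[of False] by simp
    qed
  qed
qed

end




context zp
begin

lemma gen_mult:
  assumes w: "w \<in> generate G S" shows "(int k * w) mod (2 * int p) \<in> generate G S"
proof (induction k)
  case 0
  have "\<one>\<^bsub>G\<^esub> \<in> generate G S" by (rule generate.one)
  then show ?case by simp
next
  case (Suc k)
  have "(int (Suc k) * w) mod (2 * int p) = ((int k * w) mod (2 * int p)) \<otimes>\<^bsub>G\<^esub> w"
    by (simp add: mod_add_left_eq mod_add_right_eq algebra_simps)
  then show ?case using generate.eng[OF Suc w] by simp
qed

lemma gen_all:
  assumes x: "x \<in> generate G S" and cp: "coprime x (2 * int p)"
  shows "carrier G \<subseteq> generate G S"
proof
  fix z assume z: "z \<in> carrier G"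
  then have z0: "0 \<le> z" "z < 2 * int p" using carrG by auto
  obtain v where v: "[x * v = 1] (mod 2 * int p)" using cp coprime_iff_invertible_int by blast
  define k where "k = nat ((z * v) mod (2 * int p))"
  have k: "int k = (z * v) mod (2 * int p)" unfolding k_def using P1 by simp
  have xv: "(x * v) mod (2 * int p) = 1" using v P1 by (simp add: cong_def)
  have "(int k * x) mod (2 * int p) = (z * v * x) mod (2 * int p)"
    unfolding k by (simp add: mod_mult_left_eq)
  also have "\<dots> = (z * ((x * v) mod (2 * int p))) mod (2 * int p)"
    by (simp add: mod_mult_right_eq ac_simps)
  also have "\<dots> = z" using xv z0 by simp
  finally show "z \<in> generate G S" using gen_mult[OF x, of k] by simp
qed

lemma gen_even:
  assumes y: "y \<in> generate G S" "even y" "\<not> int p dvd y"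
    and z: "z \<in> carrier G" "even z"
  shows "z \<in> generate G S"
proof -
  obtain y' where y': "y = 2 * y'" using y(2) by (auto elim: evenE)
  obtain z' where z': "z = 2 * z'" using z(2) by (auto elim: evenE)
  have z0: "0 \<le> z" "z < 2 * int p" using z carrG by auto
  have "\<not> int p dvd y'" using y(3) y' by auto
  then have "coprime y' (int p)" by (rule cop_P)
  then obtain v where v: "[y' * v = 1] (mod int p)" using coprime_iff_invertible_int by blast
  define k where "k = nat ((z' * v) mod int p)"
  have k: "int k = (z' * v) mod int p" unfolding k_def using P1 by simp
  have "[int k * y' = (z' * v) * y'] (mod int p)" unfolding k by (intro cong_mult cong_refl) (simp add: cong_def)
  moreover have "[(z' * v) * y' = z' * 1] (mod int p)"
    using cong_mult[OF cong_refl[of z'] v] by (simp add: ac_simps)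
  ultimately have "[int k * y' = z'] (mod int p)" using cong_trans by fastforce
  then have "int p dvd int k * y' - z'" by (simp add: cong_iff_dvd_diff)
  then have "2 * int p dvd 2 * (int k * y' - z')" by (rule mult_dvd_mono[OF dvd_refl])
  then have "[int k * y = z] (mod 2 * int p)" unfolding y' z' by (simp add: cong_iff_dvd_diff algebra_simps)
  then have "(int k * y) mod (2 * int p) = z" using z0 by (simp add: cong_def)
  then show ?thesis using gen_mult[OF y(1), of k] by simp
qed

lemma Phi_gen:
  assumes t: "t \<in> Tr mm"
  shows "generate G (Phi t) = carrier G \<longleftrightarrow> gen t"
proof -
  obtain e A B where eAB: "t = (e, A, B)" by (cases t)
  have AB: "A \<subseteq> {..<mm}" "B \<subseteq> {..<mm}" using t eAB by (auto simp: Tr_def)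
  have sub: "generate G (Phi t) \<subseteq> carrier G"
    using group.generate_in_carrier[OF grpG Phi_sub] by blast
  have one_car: "1 \<in> carrier G" using carrG P1 by simp
  show ?thesis
  proof
    assume g: "generate G (Phi t) = carrier G"
    show "gen t"
    proof (rule ccontr)
      assume ng: "\<not> gen t"
      then have B0: "B = {}" and eA: "\<not> e \<or> A = {}" unfolding eAB gen_def by auto
      from eA show False
      proof
        assume ne: "\<not> e"
        define H where "H = {x \<in> carrier G. even x}"
        have "subgroup H G"
        proof (rule group.subgroupI[OF grpG])
          show "H \<subseteq> carrier G" unfolding H_def by auto
          show "H \<noteq> {}" unfolding H_def using carrG P1 by (auto intro!: exI[of _ 0])
          show "inv\<^bsub>G\<^esub> a \<in> H" if "a \<in> H" for a
            using that invG[of a] P1 unfolding H_def by (auto simp: carrG mod2P_even)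
          show "a \<otimes>\<^bsub>G\<^esub> b \<in> H" if "a \<in> H" "b \<in> H" for a b
            using that P1 unfolding H_def by (auto simp: carrG mod2P_even)
        qed
        moreover have "Phi t \<subseteq> H" unfolding H_def eAB Phi_def using ne B0 by (auto simp: carrG)
        ultimately have "generate G (Phi t) \<subseteq> H" using group.generate_subgroup_incl[OF grpG] by blast
        then have "1 \<in> H" using g one_car by auto
        then show False unfolding H_def by simp
      next
        assume A0: "A = {}"
        define K where "K = {0, int p}"
        have "subgroup K G"
        proof (rule group.subgroupI[OF grpG])
          show "K \<subseteq> carrier G" unfolding K_def using P1 by (auto simp: carrG)
          show "K \<noteq> {}" unfolding K_def by auto
          show "inv\<^bsub>G\<^esub> a \<in> K" if "a \<in> K" for a
          proof -
            have "a \<in> carrier G" using that P1 unfolding K_def by (auto simp: carrG)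
            then show ?thesis using that invG minusP unfolding K_def by auto
          qed
          show "a \<otimes>\<^bsub>G\<^esub> b \<in> K" if "a \<in> K" "b \<in> K" for a b
            using that P1 unfolding K_def by auto
        qed
        moreover have "Phi t \<subseteq> K" unfolding K_def eAB Phi_def using A0 B0 by auto
        ultimately have "generate G (Phi t) \<subseteq> K" using group.generate_subgroup_incl[OF grpG] by blast
        then have "1 \<in> K" using g one_car by auto
        then show False unfolding K_def using P1 by simp
      qed
    qed
  next
    assume gt: "gen t"
    have "carrier G \<subseteq> generate G (Phi t)"
    proof (cases "B = {}")
      case False
      then obtain b where b: "b \<in> B" by auto
      then have "b < mm" using AB by auto
      then obtain x where x: "0 \<le> x" "x < 2 * int p" "\<not> int p dvd x" "odd x" "c x = b"
        using hit[of b False] by auto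
      then have "x \<in> Phi t" using b unfolding eAB Phi_def by auto
      then have "x \<in> generate G (Phi t)" by (rule generate.incl)
      then show ?thesis using gen_all cop_2P x by blast
    next
      case True
      then have e: "e" and "A \<noteq> {}" using gt unfolding eAB gen_def by auto
      then obtain a where a: "a \<in> A" by auto
      then have "a < mm" using AB by auto
      then obtain y where y: "0 \<le> y" "y < 2 * int p" "\<not> int p dvd y" "even y" "c y = a"
        using hit[of a True] by auto
      then have "y \<in> Phi t" using a unfolding eAB Phi_def by auto
      then have yg: "y \<in> generate G (Phi t)" by (rule generate.incl)
      have "int p \<in> Phi t" using e P1 unfolding eAB Phi_def by auto
      then have pg: "int p \<in> generate G (Phi t)" by (rule generate.incl)
      show ?thesis
      proof
        fix z assume z: "z \<in> carrier G"
        show "z \<in> generate G (Phi t)"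
        proof (cases "even z")
          case True then show ?thesis using gen_even[OF yg y(4) y(3) z] by simp
        next
          case False
          define w where "w = (z + int p) mod (2 * int p)"
          have we: "even w" unfolding w_def using False oddP by (simp add: mod2P_even)
          have wc: "w \<in> carrier G" unfolding w_def using P1 by (simp add: carrG)
          have wg: "w \<in> generate G (Phi t)" using gen_even[OF yg y(4) y(3) wc we] .
          have "w \<otimes>\<^bsub>G\<^esub> int p = (z + int p + int p) mod (2 * int p)"
            unfolding w_def by (simp add: mod_add_left_eq)
          also have "\<dots> = z" using z carrG by (simp add: algebra_simps)
          finally show ?thesis using generate.eng[OF wg pg] by simp
        qed
      qed
    qed
    then show "generate G (Phi t) = carrier G" using sub by blast
  qed
qed

lemma inj_mul:
  assumes cp: "coprime u (2 * int p)"
  shows "inj_on (\<lambda>x. (u * x) mod (2 * int p)) (carrier G)"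
proof (rule inj_onI)
  fix x y assume x: "x \<in> carrier G" and y: "y \<in> carrier G"
    and e: "(u * x) mod (2 * int p) = (u * y) mod (2 * int p)"
  then have "[u * x = u * y] (mod 2 * int p)" by (simp add: cong_def)
  then have "[x = y] (mod 2 * int p)" using cong_mult_lcancel[OF cp] by simp
  then show "x = y" using x y carrG by (auto intro: cong_less_imp_eq_int)
qed

lemma Phi_act:
  assumes cp: "coprime u (2 * int p)" and t: "t \<in> Tr mm"
  shows "(\<lambda>x. (u * x) mod (2 * int p)) ` Phi t = Phi (shT mm (c u) t)"
proof -
  obtain e A B where eAB: "t = (e, A, B)" by (cases t)
  have uo: "odd u" and up: "\<not> int p dvd u" using cop_2P_D[OF cp] by auto
  define f where "f x = (u * x) mod (2 * int p)" for x
  have sub: "f ` Phi t \<subseteq> Phi (shT mm (c u) t)"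
  proof
    fix y assume "y \<in> f ` Phi t"
    then obtain x where x: "x \<in> Phi t" "y = f x" by auto
    have r: "0 \<le> f x" "f x < 2 * int p" unfolding f_def using P1 by auto
    have cg: "[f x = u * x] (mod int p)" unfolding f_def by (rule mod2P_cong)
    have par: "even (f x) \<longleftrightarrow> even x" unfolding f_def using uo by (simp add: mod2P_even)
    from x(1) consider "x = int p \<and> e" | "\<not> int p dvd x \<and> even x \<and> c x \<in> A"
      | "\<not> int p dvd x \<and> odd x \<and> c x \<in> B" unfolding eAB Phi_def by auto
    then show "y \<in> Phi (shT mm (c u) t)"
    proof cases
      case 1
      obtain k where k: "u = 2 * k + 1" using uo by (auto elim: oddE)
      have "u * int p = int p + k * (2 * int p)" unfolding k by (simp add: algebra_simps)
      then have "f x = int p" using 1 P1 unfolding f_def by simp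
      then show ?thesis using 1 x P1 unfolding eAB shT_def Phi_def by simp
    next
      case 2
      have nd: "\<not> int p dvd u * x" using 2 up primeP prime_dvd_mult_iff by blast
      then have "\<not> int p dvd f x" using cong_dvd_iff[OF cg] by simp
      moreover have "c (f x) = (c x + c u) mod mm"
        using c_cong[OF cg] c_mult[OF up] 2 by (simp add: add.commute)
      moreover have "(c x + c u) mod mm \<in> sh mm (c u) A" using 2 by (rule mem_sh[OF conjunct2[OF conjunct2]])
      ultimately show ?thesis using r par 2 x unfolding eAB shT_def Phi_def by auto
    next
      case 3
      have nd: "\<not> int p dvd u * x" using 3 up primeP prime_dvd_mult_iff by blast
      then have "\<not> int p dvd f x" using cong_dvd_iff[OF cg] by simp
      moreover have "c (f x) = (c x + c u) mod mm"
        using c_cong[OF cg] c_mult[OF up] 3 by (simp add: add.commute)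
      moreover have "(c x + c u) mod mm \<in> sh mm (c u) B" using 3 by (rule mem_sh[OF conjunct2[OF conjunct2]])
      ultimately show ?thesis using r par 3 x unfolding eAB shT_def Phi_def by auto
    qed
  qed
  have "card (f ` Phi t) = card (Phi t)"
    unfolding f_def by (rule card_image, rule inj_on_subset[OF inj_mul[OF cp] Phi_sub])
  also have "\<dots> = wt t" using card_Phi t by simp
  also have "\<dots> = wt (shT mm (c u) t)" using wt_shT t by simp
  also have "\<dots> = card (Phi (shT mm (c u) t))" using card_Phi shT_Tr[OF mm_pos t] by simp
  finally have "f ` Phi t = Phi (shT mm (c u) t)"
    using card_subset_eq[OF finite_Phi sub] by simp
  then show ?thesis unfolding f_def .
qed

lemma mul_iso:
  assumes cp: "coprime u (2 * int p)"
  shows "(\<lambda>x. (u * x) mod (2 * int p)) \<in> iso G G"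
proof -
  define f where "f x = (u * x) mod (2 * int p)" for x
  have into: "f ` carrier G \<subseteq> carrier G" unfolding f_def using P1 by (auto simp: carrG)
  have hom: "f \<in> hom G G"
    unfolding hom_def
  proof (intro CollectI conjI ballI)
    show "f \<in> carrier G \<rightarrow> carrier G" using into by auto
    fix x y assume "x \<in> carrier G" "y \<in> carrier G"
    show "f (x \<otimes>\<^bsub>G\<^esub> y) = f x \<otimes>\<^bsub>G\<^esub> f y"
      unfolding f_def by (simp add: mod_mult_right_eq mod_add_eq distrib_left)
  qed
  have inj: "inj_on f (carrier G)" using inj_mul[OF cp] unfolding f_def .
  have "f ` carrier G = carrier G" using endo_inj_surj[OF _ into inj] by (simp add: carrG)
  then have "bij_betw f (carrier G) (carrier G)" using inj unfolding bij_betw_def by simp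
  then show ?thesis using hom unfolding iso_def f_def by simp
qed

lemma iso_form:
  assumes a: "\<alpha> \<in> iso G G"
  shows "\<exists>u. coprime u (2 * int p) \<and> (\<forall>x\<in>carrier G. \<alpha> x = (u * x) mod (2 * int p))"
proof -
  have hom: "\<alpha> \<in> hom G G" and bij: "bij_betw \<alpha> (carrier G) (carrier G)" using a unfolding iso_def by auto
  have a0: "\<alpha> 0 = 0" using hom_one[OF hom grpG grpG] by simp
  define u where "u = \<alpha> 1"
  have one_car: "1 \<in> carrier G" using carrG P1 by simp
  have claim: "k < 2 * p \<longrightarrow> \<alpha> (int k) = (u * int k) mod (2 * int p)" for k
  proof (induction k)
    case 0 then show ?case using a0 by simp
  next
    case (Suc k)
    show ?case
    proof
      assume sk: "Suc k < 2 * p"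
      have kc: "int k \<in> carrier G" using sk carrG by auto
      have "int (Suc k) = int k \<otimes>\<^bsub>G\<^esub> 1" using sk by simp
      then have "\<alpha> (int (Suc k)) = \<alpha> (int k) \<otimes>\<^bsub>G\<^esub> \<alpha> 1"
        using hom_mult[OF hom kc one_car] by simp
      also have "\<dots> = ((u * int k) mod (2 * int p) + u) mod (2 * int p)"
        using Suc sk unfolding u_def by simp
      also have "\<dots> = (u * int (Suc k)) mod (2 * int p)"
        by (simp add: mod_add_left_eq mod_add_right_eq algebra_simps)
      finally show "\<alpha> (int (Suc k)) = (u * int (Suc k)) mod (2 * int p)" .
    qed
  qed
  have form: "\<forall>x\<in>carrier G. \<alpha> x = (u * x) mod (2 * int p)"
  proof
    fix x assume "x \<in> carrier G"
    then have x: "0 \<le> x" "x < 2 * int p" using carrG by auto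
    then have "nat x < 2 * p" by linarith
    then show "\<alpha> x = (u * x) mod (2 * int p)" using claim[of "nat x"] x by simp
  qed
  have "1 \<in> \<alpha> ` carrier G" using bij one_car unfolding bij_betw_def by simp
  then obtain x where x: "x \<in> carrier G" "\<alpha> x = 1" by auto
  then have "(u * x) mod (2 * int p) = 1" using form by simp
  then have "[u * x = 1] (mod 2 * int p)" using P1 by (simp add: cong_def)
  then have "coprime u (2 * int p)" using coprime_iff_invertible_int by blast
  then show ?thesis using form by blast
qed

end




context zp
begin

lemma aut_orbit_Phi:
  assumes t: "t \<in> Tr mm"
  shows "aut_orbit G (Phi t) = Phi ` cyc_action.orb mm (shT mm) t"
proof -
  interpret C: cyc_action mm "Tr mm" "shT mm" using cyc[OF mm_pos] .
  show ?thesis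
  proof
    show "aut_orbit G (Phi t) \<subseteq> Phi ` C.orb t"
    proof
      fix y assume "y \<in> aut_orbit G (Phi t)"
      then obtain \<alpha> where a: "\<alpha> \<in> iso G G" "y = \<alpha> ` Phi t" unfolding aut_orbit_def by auto
      obtain u where u: "coprime u (2 * int p)" "\<forall>x\<in>carrier G. \<alpha> x = (u * x) mod (2 * int p)"
        using iso_form[OF a(1)] by blast
      have "y = (\<lambda>x. (u * x) mod (2 * int p)) ` Phi t"
        unfolding a(2)
      proof (rule image_cong[OF refl])
        fix x assume "x \<in> Phi t"
        then have "x \<in> carrier G" using Phi_sub[of t] by blast
        then show "\<alpha> x = (u * x) mod (2 * int p)" using u(2) by simp
      qed
      also have "\<dots> = Phi (shT mm (c u) t)" by (rule Phi_act[OF u(1) t])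
      finally have "y = Phi (shT mm (c u) t)" .
      moreover have "shT mm (c u) t \<in> C.orb t" unfolding C.orb_def using c_lt by auto
      ultimately show "y \<in> Phi ` C.orb t" by auto
    qed
    show "Phi ` C.orb t \<subseteq> aut_orbit G (Phi t)"
    proof
      fix y assume "y \<in> Phi ` C.orb t"
      then obtain j where j: "j < mm" "y = Phi (shT mm j t)" unfolding C.orb_def by auto
      obtain x where x: "0 \<le> x" "x < 2 * int p" "\<not> int p dvd x" "odd x" "c x = j"
        using hit[OF j(1), of False] by auto
      have cp: "coprime x (2 * int p)" using cop_2P x by simp
      have "y = (\<lambda>z. (x * z) mod (2 * int p)) ` Phi t" using Phi_act[OF cp t] j x by simp
      then show "y \<in> aut_orbit G (Phi t)" unfolding aut_orbit_def using mul_iso[OF cp] by auto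
    qed
  qed
qed

lemma cayley_eq:
  "{\<Omega> \<in> cayley_sets G. card \<Omega> = k} = Phi ` {t\<in>Tr mm. gen t \<and> wt t = k}"
proof
  show "Phi ` {t\<in>Tr mm. gen t \<and> wt t = k} \<subseteq> {\<Omega> \<in> cayley_sets G. card \<Omega> = k}"
  proof
    fix y assume "y \<in> Phi ` {t\<in>Tr mm. gen t \<and> wt t = k}"
    then obtain t where t: "t \<in> Tr mm" "gen t" "wt t = k" "y = Phi t" by auto
    have "generate G (Phi t) = carrier G" using Phi_gen[OF t(1)] t(2) by simp
    then show "y \<in> {\<Omega> \<in> cayley_sets G. card \<Omega> = k}"
      unfolding cayley_sets_def using t Phi_sub Phi_inv zero_notin_Phi card_Phi by auto
  qed
  show "{\<Omega> \<in> cayley_sets G. card \<Omega> = k} \<subseteq> Phi ` {t\<in>Tr mm. gen t \<and> wt t = k}"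
  proof
    fix S assume "S \<in> {\<Omega> \<in> cayley_sets G. card \<Omega> = k}"
    then have S: "S \<subseteq> carrier G" "m_inv G ` S = S" "generate G S = carrier G" "0 \<notin> S" "card S = k"
      unfolding cayley_sets_def by auto
    have neg: "(- x) mod (2 * int p) \<in> S" if "x \<in> S" for x
    proof -
      have "m_inv G x \<in> S" using S(2) that by blast
      then show ?thesis using invG S(1) that by auto
    qed
    have eq: "Phi (ext S) = S" by (rule Phi_ext[OF S(1) S(4) neg])
    have "gen (ext S)" using Phi_gen[OF ext_Tr[of S]] eq S(3) by simp
    moreover have "wt (ext S) = k" using card_Phi[OF ext_Tr[of S]] eq S(5) by simp
    ultimately show "S \<in> Phi ` {t\<in>Tr mm. gen t \<and> wt t = k}" using eq ext_Tr
      by (auto intro!: image_eqI[of _ _ "ext S"])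
  qed
qed

lemma a_w_eq:
  "a_w G k = card (cyc_action.orb mm (shT mm) ` {t\<in>Tr mm. gen t \<and> wt t = k})"
proof -
  interpret C: cyc_action mm "Tr mm" "shT mm" using cyc[OF mm_pos] .
  define Y where "Y = {t\<in>Tr mm. gen t \<and> wt t = k}"
  have "a_w G k = card (aut_orbit G ` Phi ` Y)" unfolding a_w_def cayley_eq Y_def ..
  also have "aut_orbit G ` Phi ` Y = (image Phi) ` (C.orb ` Y)"
    unfolding image_image using aut_orbit_Phi by (intro image_cong) (auto simp: Y_def)
  also have "card \<dots> = card (C.orb ` Y)"
  proof (rule card_image, rule inj_on_image)
    show "inj_on Phi (\<Union> (C.orb ` Y))"
      by (rule inj_on_subset[OF inj_Phi]) (use C.orb_subset in \<open>auto simp: Y_def\<close>)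
  qed
  finally show ?thesis unfolding Y_def .
qed

lemma card_carrier: "card (carrier G) = 2 * p"
  using carrG by simp

end

theorem corollary5p2:
  fixes p :: nat
  assumes "prime p" and "odd p"
  shows "(\<forall>x::real. Psi_w (integer_mod_group (2 * p)) x =
            2 / (real p - 1) *
              (\<Sum>d \<in> {d. d dvd (p - 1) div 2}.
                 real (totient ((p - 1) div (2 * d))) *
                 (1 + x ^ ((p - 1) div d)) ^ d *
                 ((1 + x ^ ((p - 1) div d)) ^ d * (1 + x) - 1))
            - x)
       \<and> E_w (integer_mod_group (2 * p)) = Psi_w (integer_mod_group (2 * p)) 1
       \<and> E_w (integer_mod_group (2 * p)) =
            - 1 + 2 / (real p - 1) *
              (\<Sum>d \<in> {d. d dvd (p - 1) div 2}.
                 real (totient ((p - 1) div (2 * d))) * 2 ^ d * (2 ^ (d + 1) - 1))"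
proof -
  obtain g where g: "residue_primroot p g" using prime_primitive_root_exists[OF prime_gt_1_nat[OF assms(1)] assms(1)] by blast
  interpret Z: zp p g using assms g by unfold_locales
  define m where "m = Z.mm"
  have pm: "p - 1 = 2 * m" unfolding m_def by (rule Z.pm)
  have m0: "m > 0" unfolding m_def by (rule Z.mm_pos)
  have mdef: "(p - 1) div 2 = m" using pm by simp
  have rp: "real p - 1 = 2 * real m" using pm Z.p3 by linarith
  have r4: "2 * p - 1 = 4 * m + 1" using pm Z.p3 by arith
  have main: "Psi_w (integer_mod_group (2 * p)) x =
            2 / (real p - 1) *
              (\<Sum>d \<in> {d. d dvd (p - 1) div 2}.
                 real (totient ((p - 1) div (2 * d))) *
                 (1 + x ^ ((p - 1) div d)) ^ d *
                 ((1 + x ^ ((p - 1) div d)) ^ d * (1 + x) - 1))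
            - x" for x :: real
  proof -
    have "Psi_w (integer_mod_group (2 * p)) x =
          (\<Sum>k = 1..4 * m + 1. real (card (cyc_action.orb m (shT m) ` {t\<in>Tr m. gen t \<and> wt t = k})) * x ^ k)"
      unfolding Psi_w_def Z.card_carrier Z.a_w_eq m_def[symmetric] using r4 by simp
    also have "\<dots> = (1 / real m) * (\<Sum>d | d dvd m. real (totient (m div d)) *
            ((1 + x) * ((1 + (x^2) ^ (m div d)) ^ d)^2 - (1 + (x^2) ^ (m div d)) ^ d)) - x"
      by (rule count_triples[OF m0])
    also have "(\<Sum>d | d dvd m. real (totient (m div d)) *
            ((1 + x) * ((1 + (x^2) ^ (m div d)) ^ d)^2 - (1 + (x^2) ^ (m div d)) ^ d))
        = (\<Sum>d \<in> {d. d dvd (p - 1) div 2}.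
                 real (totient ((p - 1) div (2 * d))) *
                 (1 + x ^ ((p - 1) div d)) ^ d *
                 ((1 + x ^ ((p - 1) div d)) ^ d * (1 + x) - 1))"
    proof (rule sum.cong)
      show "{d. d dvd m} = {d. d dvd (p - 1) div 2}" using mdef by simp
      fix d assume "d \<in> {d. d dvd (p - 1) div 2}"
      then have d: "d dvd m" using mdef by simp
      have d0: "d > 0" using d m0 by (auto intro: Nat.gr0I)
      have e1: "(p - 1) div (2 * d) = m div d" using pm by (simp add: div_mult2_eq)
      have e2: "(p - 1) div d = 2 * (m div d)" using pm d by (simp add: div_mult_swap)
      have e3: "x ^ ((p - 1) div d) = (x^2) ^ (m div d)" unfolding e2 by (simp add: power_mult)
      show "real (totient (m div d)) * ((1 + x) * ((1 + (x^2) ^ (m div d)) ^ d)^2 - (1 + (x^2) ^ (m div d)) ^ d)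
          = real (totient ((p - 1) div (2 * d))) * (1 + x ^ ((p - 1) div d)) ^ d *
                 ((1 + x ^ ((p - 1) div d)) ^ d * (1 + x) - 1)"
        unfolding e1 e3 by (simp add: algebra_simps power2_eq_square)
    qed
    finally show ?thesis using rp m0 by (simp add: field_simps)
  qed
  have E1: "E_w (integer_mod_group (2 * p)) = Psi_w (integer_mod_group (2 * p)) 1"
    unfolding E_w_def ..
  have E2: "E_w (integer_mod_group (2 * p)) =
            - 1 + 2 / (real p - 1) *
              (\<Sum>d \<in> {d. d dvd (p - 1) div 2}.
                 real (totient ((p - 1) div (2 * d))) * 2 ^ d * (2 ^ (d + 1) - 1))"
    unfolding E1 main[of 1] by (simp add: algebra_simps)
  show ?thesis using main E1 E2 by blast
qed


end
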